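(* Let $1\le\ell<L/2$. Among hard-core configurations $\sigma$ with real area $\tilde n(\sigma)=2\ell^2+2\ell+1$, those of minimal perimeter $P(\sigma)$ are exactly those whose odd region consists of a unique odd cluster, and this cluster is the rhombus $\mathcal{R}_{\ell,\ell}$. In particular, for $\tilde n=\frac{L^2}{2}-L+1$ this rhombus is $\mathcal{R}_{\frac L2-1,\frac L2-1}$.
   Context: $L\ge6$ even; $\Lambda=(V,E)$ is the $L\times L$ toric grid graph ($V=\{0,\dots,L-1\}^2$, adjacency = difference $\pm1$ mod $L$ in exactly one coordinate), even/odd sites $V_{\mathrm{e}},V_{\mathrm{o}}$ by parity of the coordinate sum. Hard-core configurations: $\mathcal{X}=\{\sigma\in\{0,1\}^V:\sigma(v)\sigma(w)=0$ for adjacent $v,w\}$. For $S\subseteq V$: $\partial^+S$ = sites outside $S$ adjacent to $S$; $\nabla S$ = edges between $S$ and $\partial^+S$; $P(S)=|\nabla S|$. An odd cluster is $C\subseteq V$ such that every odd site of $C$ has its four neighbours in $C$ and $C\cap V_{\mathrm{e}}$ is connected in the graph on $V_{\mathrm{e}}$ joining even sites at distance 2. The odd region of $\sigma$ is $\mathcal{O}(\sigma)=\{v\in V_{\mathrm{o}}:\sigma(v)=1\}\cup\{v\in V_{\mathrm{e}}:\sigma(v)=0\}$, the disjoint union of its connected components $C_1,\dots,C_m$ (odd clusters); the perimeter of $\sigma$ is $P(\sigma)=\sum_iP(C_i)$. The real area of $\sigma$ is $\tilde n(\sigma)=o(\sigma)+\tilde e(\sigma)$, where $o(\sigma)$ is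 the number of occupied odd sites and $\tilde e(\sigma)$ the number of empty even sites. For $\eta\in V_{\mathrm{o}}$, the rhombus $\mathcal{R}_{\ell_1,\ell_2}(\eta)=S\cup\partial^+S$ with $S=\{(\eta_1+k+j,\eta_2+k-j):0\le k<\ell_1,0\le j<\ell_2\}$ (mod $L$). *)

theory Defs
  imports Main
begin

type_synonym site = "nat \<times> nat"

definition sites :: "nat \<Rightarrow> site set" where
  "sites L = {0..<L} \<times> {0..<L}"

definition even_sites :: "nat \<Rightarrow> site set" where
  "even_sites L = {v \<in> sites L. even (fst v + snd v)}"

definition odd_sites :: "nat \<Rightarrow> site set" where
  "odd_sites L = {v \<in> sites L. odd (fst v + snd v)}"

definition adj :: "nat \<Rightarrow> site \<Rightarrow> site \<Rightarrow> bool" where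
  "adj L v w \<longleftrightarrow> v \<in> sites L \<and> w \<in> sites L \<and>
     ((fst v = fst w \<and> (snd w = (snd v + 1) mod L \<or> snd v = (snd w + 1) mod L)) \<or>
      (snd v = snd w \<and> (fst w = (fst v + 1) mod L \<or> fst v = (fst w + 1) mod L)))"

text \<open>Hard-core configurations (sigma v = True means occupied; canonically False off the torus).\<close>
definition hardcore :: "nat \<Rightarrow> (site \<Rightarrow> bool) set" where
  "hardcore L = {\<sigma>. (\<forall>v. \<sigma> v \<longrightarrow> v \<in> sites L) \<and>
                     (\<forall>v w. adj L v w \<longrightarrow> \<not> (\<sigma> v \<and> \<sigma> w))}"

definition ext_boundary :: "nat \<Rightarrow> site set \<Rightarrow> site set" where
  "ext_boundary L S = {w \<in> sites L - S. \<exists>v\<in>S. adj L v w}"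

definition edge_boundary :: "nat \<Rightarrow> site set \<Rightarrow> (site \<times> site) set" where
  "edge_boundary L S = {(v, w). v \<in> S \<and> w \<in> ext_boundary L S \<and> adj L v w}"

definition perim :: "nat \<Rightarrow> site set \<Rightarrow> nat" where
  "perim L S = card (edge_boundary L S)"

definition odd_region :: "nat \<Rightarrow> (site \<Rightarrow> bool) \<Rightarrow> site set" where
  "odd_region L \<sigma> = {v \<in> odd_sites L. \<sigma> v} \<union> {v \<in> even_sites L. \<not> \<sigma> v}"

definition adj_within :: "nat \<Rightarrow> site set \<Rightarrow> (site \<times> site) set" where
  "adj_within L A = {(a, b). a \<in> A \<and> b \<in> A \<and> adj L a b}"

definition components :: "nat \<Rightarrow> site set \<Rightarrow> site set set" where
  "components L A = {{w \<in> A. (v, w) \<in> (adj_within L A)\<^sup>*} | v. v \<in> A}"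

definition perimeter :: "nat \<Rightarrow> (site \<Rightarrow> bool) \<Rightarrow> nat" where
  "perimeter L \<sigma> = (\<Sum>C\<in>components L (odd_region L \<sigma>). perim L C)"

definition real_area :: "nat \<Rightarrow> (site \<Rightarrow> bool) \<Rightarrow> nat" where
  "real_area L \<sigma> = card {v \<in> odd_sites L. \<sigma> v} + card {v \<in> even_sites L. \<not> \<sigma> v}"

definition rhombus_core :: "nat \<Rightarrow> nat \<Rightarrow> nat \<Rightarrow> site \<Rightarrow> site set" where
  "rhombus_core L l1 l2 \<eta> =
     {(nat ((int (fst \<eta>) + int k + int j) mod int L),
       nat ((int (snd \<eta>) + int k - int j) mod int L)) | k j. k < l1 \<and> j < l2}"

definition rhombus :: "nat \<Rightarrow> nat \<Rightarrow> nat \<Rightarrow> site \<Rightarrow> site set" where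
  "rhombus L l1 l2 \<eta> = rhombus_core L l1 l2 \<eta> \<union> ext_boundary L (rhombus_core L l1 l2 \<eta>)"

end

theory Submission
  imports Defs
begin

lemma mod_succ: "x < L \<Longrightarrow> Suc x mod L = (if Suc x = L then 0 else Suc x)"
  by (cases "Suc x = L") auto

lemma mod_pred: "x < L \<Longrightarrow> (x + L - Suc 0) mod L = (if x = 0 then L - 1 else x - 1)"
proof -
  assume a: "x < L"
  show ?thesis
  proof (cases "x = 0")
    case True then show ?thesis using a by simp
  next
    case False
    then have "x + L - 1 = (x - 1) + L" by simp
    then have "(x + L - 1) mod L = (x - 1) mod L" by simp
    then show ?thesis using a False by simp
  qed
qed

lemma succ_pred_iff: "a < L \<Longrightarrow> x < L \<Longrightarrow> (x = Suc a mod L) \<longleftrightarrow> (a = (x + L - Suc 0) mod L)"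
  by (auto simp: mod_succ mod_pred)

lemma adj_sym: "adj L v w = adj L w v"
  unfolding adj_def by auto

lemma adj_char:
  assumes "2 \<le> L"
  shows "adj L (x, y) w \<longleftrightarrow> x < L \<and> y < L \<and>
     (w = ((x + 1) mod L, y) \<or> w = ((x + L - 1) mod L, y) \<or>
      w = (x, (y + 1) mod L) \<or> w = (x, (y + L - 1) mod L))"
proof -
  obtain a b where w: "w = (a, b)" by (cases w)
  have L0: "0 < L" using assms by simp
  show ?thesis
  proof
    assume h: "adj L (x, y) w"
    then have r: "x < L" "y < L" "a < L" "b < L" unfolding adj_def sites_def w by auto
    from h show "x < L \<and> y < L \<and>
     (w = ((x + 1) mod L, y) \<or> w = ((x + L - 1) mod L, y) \<or>
      w = (x, (y + 1) mod L) \<or> w = (x, (y + L - 1) mod L))"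
      unfolding adj_def w using r succ_pred_iff[of a L x] succ_pred_iff[of b L y] by auto
  next
    assume h: "x < L \<and> y < L \<and>
     (w = ((x + 1) mod L, y) \<or> w = ((x + L - 1) mod L, y) \<or>
      w = (x, (y + 1) mod L) \<or> w = (x, (y + L - 1) mod L))"
    then have r: "x < L" "y < L" "a < L" "b < L" unfolding w using L0 by auto
    from h show "adj L (x, y) w"
      unfolding adj_def w sites_def using r succ_pred_iff[of a L x] succ_pred_iff[of b L y] by auto
  qed
qed

definition G :: "nat \<Rightarrow> nat" where
  "G m = (\<Sum>p<m. min p (m - 1 - p))"

lemma G_rec: "G (Suc (Suc m)) = G m + m"
proof -
  have "G (Suc (Suc m)) = (\<Sum>p<Suc (Suc m). min p (Suc m - p))"
    unfolding G_def by simp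
  also have "\<dots> = (\<Sum>p<Suc m. min (Suc p) (m - p))"
    by (subst sum.lessThan_Suc_shift) simp
  also have "\<dots> = (\<Sum>p<m. min (Suc p) (m - p))"
    by simp
  also have "\<dots> = (\<Sum>p<m. 1 + min p (m - 1 - p))"
    by (rule sum.cong) auto
  also have "\<dots> = m + G m"
    unfolding G_def sum.distrib by simp
  finally show ?thesis by simp
qed

lemma G_bound: "4 * G m \<le> (m - 1)^2"
proof (induction m rule: nat_less_induct)
  case (1 m)
  show ?case
  proof (cases m)
    case 0 then show ?thesis by (simp add: G_def)
  next
    case (Suc m1)
    show ?thesis
    proof (cases m1)
      case 0 then show ?thesis using Suc by (simp add: G_def)
    next
      case (Suc m2)
      have ih: "4 * G m2 \<le> (m2 - 1)^2" using 1 \<open>m = Suc m1\<close> Suc by simp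
      have "4 * G m = 4 * G m2 + 4 * m2" using \<open>m = Suc m1\<close> Suc G_rec by simp
      also have "\<dots> \<le> (m2 - 1)^2 + 4 * m2" using ih by simp
      also have "\<dots> \<le> (m - 1)^2"
      proof (cases m2)
        case 0 then show ?thesis using \<open>m = Suc m1\<close> Suc by simp
      next
        case (Suc m3)
        then show ?thesis using \<open>m = Suc m1\<close> \<open>m1 = Suc m2\<close> by (simp add: power2_eq_square algebra_simps)
      qed
      finally show ?thesis .
    qed
  qed
qed

lemma sum_shift:
  fixes e L :: nat
  assumes per: "\<And>y. f (y + L) = f y"
  shows "(\<Sum>j<L. f (e + j)) = (\<Sum>y<L. (f y :: nat))"
proof (induction e)
  case 0 then show ?case by simp
next
  case (Suc e)
  have "(\<Sum>j<Suc L. f (e + j)) = f e + (\<Sum>j<L. f (e + Suc j))"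
    by (subst sum.lessThan_Suc_shift) simp
  moreover have "(\<Sum>j<Suc L. f (e + j)) = (\<Sum>j<L. f (e + j)) + f e"
    using per[of e] by (simp add: add.commute)
  ultimately have "(\<Sum>j<L. f (e + Suc j)) = (\<Sum>j<L. f (e + j))" by simp
  then show ?case using Suc by simp
qed

lemma case2:
  fixes a b :: "nat \<Rightarrow> nat" and L l :: nat
  assumes b0: "b 0 = 0" and bL: "b L = 0"
    and H1: "\<And>j. a (Suc j) \<le> b j" and H1': "\<And>j. a j \<le> b (Suc j)" and H2: "\<And>j. a j \<le> b j"
    and H3: "\<And>j. j < L \<Longrightarrow> 0 < a j \<Longrightarrow> a j + 1 \<le> b j"
  shows "(\<Sum>j<L. a j) \<le> G (\<Sum>j<L. (b j - a j))
         \<and> ((\<Sum>j<L. a j) = G (\<Sum>j<L. (b j - a j)) \<longrightarrow> (\<Sum>j<L. (b j - a j)) = 2*l+1 \<longrightarrow> 1 \<le> l \<longrightarrow>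
            (\<exists>j0. 1 \<le> j0 \<and> (\<forall>i. i \<le> 2*l-2 \<longrightarrow> a (j0+i) = min (i+1) (2*l-1-i) \<and> b (j0+i) = a (j0+i) + 1)
                 \<and> (\<forall>j<L. 0 < a j \<longrightarrow> j0 \<le> j \<and> j \<le> j0 + 2*l - 2)))"
proof -
  define c where "c j = b j - a j" for j
  define s where "s j = (\<Sum>i<j. c i)" for j
  define C where "C = s L"
  define k where "k = (\<Sum>j<L. a j)"
  have bac: "b j = a j + c j" for j using H2[of j] unfolding c_def by simp
  have s_Suc: "s (Suc j) = s j + c j" for j unfolding s_def by simp
  have s_mono: "s j \<le> s j'" if "j \<le> j'" for j j' unfolding s_def by (rule sum_mono2) (use that in auto)
  have U1: "a j \<le> s j" for j
  proof (induction j)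
    case 0 then show ?case using H2[of 0] b0 by simp
  next
    case (Suc j) then show ?case using H1[of j] bac[of j] s_Suc[of j] by simp
  qed
  have U2: "a j + s (Suc j) \<le> C" if "j < L" for j
  proof -
    have "\<forall>j. j < L \<longrightarrow> L - 1 - j = d \<longrightarrow> a j + s (Suc j) \<le> C" for d
    proof (induction d)
      case 0
      show ?case
      proof (intro allI impI)
        fix j assume "j < L" "L - 1 - j = 0"
        then have "Suc j = L" by simp
        then show "a j + s (Suc j) \<le> C" using H1'[of j] bL unfolding C_def by simp
      qed
    next
      case (Suc d)
      show ?case
      proof (intro allI impI)
        fix j assume j: "j < L" "L - 1 - j = Suc d"
        then have "Suc j < L" "L - 1 - Suc j = d" by auto
        then have "a (Suc j) + s (Suc (Suc j)) \<le> C" using Suc.IH by blast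
        then show "a j + s (Suc j) \<le> C" using H1'[of j] bac[of "Suc j"] s_Suc[of "Suc j"] by simp
      qed
    qed
    then show ?thesis using that by blast
  qed
  define J where "J = {j. j < L \<and> 0 < a j}"
  have cJ: "1 \<le> c j" if "j \<in> J" for j using H3[of j] that bac[of j] unfolding J_def by simp
  define g where "g p = min p (C - 1 - p)" for p
  have aJ: "a j \<le> g (s j)" and sJ: "s j < C" if "j \<in> J" for j
  proof -
    have "j < L" using that J_def by simp
    have "a j + s j + 1 \<le> C" using U2[OF \<open>j<L\<close>] s_Suc[of j] cJ[OF that] by simp
    then show "a j \<le> g (s j)" "s j < C" using U1[of j] unfolding g_def by auto
  qed
  have strict: "s j < s j'" if "j \<in> J" "j < j'" for j j'
    using s_mono[of "Suc j" j'] s_Suc[of j] cJ[OF that(1)] that(2) by simp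
  have inj: "inj_on s J"
  proof (rule inj_onI)
    fix x y assume xy: "x \<in> J" "y \<in> J" "s x = s y"
    show "x = y"
    proof (rule ccontr)
      assume "x \<noteq> y"
      then have "x < y \<or> y < x" by arith
      then show False using strict xy by fastforce
    qed
  qed
  have finJ: "finite J" unfolding J_def by simp
  have k_J: "k = (\<Sum>j\<in>J. a j)"
    unfolding k_def J_def by (rule sum.mono_neutral_right) auto
  have le1: "(\<Sum>j\<in>J. a j) \<le> (\<Sum>j\<in>J. g (s j))" by (rule sum_mono) (rule aJ)
  have eq2: "(\<Sum>j\<in>J. g (s j)) = (\<Sum>p\<in>s`J. g p)" using sum.reindex[OF inj, of g] by simp
  have le3: "(\<Sum>p\<in>s`J. g p) \<le> (\<Sum>p<C. g p)" by (rule sum_mono2) (auto simp: sJ)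
  have GC: "(\<Sum>p<C. g p) = G C" unfolding G_def g_def by simp
  have C_eq: "C = (\<Sum>j<L. (b j - a j))" unfolding C_def s_def c_def by simp
  have part1: "k \<le> G C" using k_J le1 eq2 le3 GC by linarith
  have part2: "\<exists>j0. 1 \<le> j0 \<and> (\<forall>i. i \<le> 2*l-2 \<longrightarrow> a (j0+i) = min (i+1) (2*l-1-i) \<and> b (j0+i) = a (j0+i) + 1)
                 \<and> (\<forall>j<L. 0 < a j \<longrightarrow> j0 \<le> j \<and> j \<le> j0 + 2*l - 2)"
    if kG: "k = G C" and C2: "C = 2*l+1" and l1: "1 \<le> l"
  proof -
    have e1: "(\<Sum>j\<in>J. a j) = (\<Sum>j\<in>J. g (s j))" using k_J le1 eq2 le3 GC kG by linarith
    have e3: "(\<Sum>p\<in>s`J. g p) = (\<Sum>p<C. g p)" using k_J le1 eq2 le3 GC kG by linarith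
    have aeq: "a j = g (s j)" if "j \<in> J" for j
    proof (rule ccontr)
      assume "a j \<noteq> g (s j)"
      then have "a j < g (s j)" using aJ[OF that] by simp
      then have "(\<Sum>j\<in>J. a j) < (\<Sum>j\<in>J. g (s j))"
        using sum_strict_mono_ex1[OF finJ, of a "\<lambda>j. g (s j)"] aJ that by blast
      then show False using e1 by simp
    qed
    have cover: "p \<in> s`J" if "p < C" "0 < g p" for p
    proof (rule ccontr)
      assume "p \<notin> s`J"
      then have "(\<Sum>p\<in>s`J. g p) < (\<Sum>p<C. g p)"
        using sum_strict_mono2[of "{..<C}" "s`J" p g] that sJ by auto
      then show False using e3 by simp
    qed
    have gdef: "g p = min p (2*l - p)" for p unfolding g_def C2 by simp
    have rng: "1 \<le> s j \<and> s j \<le> 2*l - 1" if "j \<in> J" for j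
    proof -
      have "0 < a j" using that J_def by simp
      then have "0 < g (s j)" using aJ[OF that] by simp
      then show ?thesis unfolding gdef by auto
    qed
    obtain j0 where j0: "j0 \<in> J" "s j0 = 1"
      using cover[of 1] l1 unfolding gdef C2 by fastforce
    have chain: "j0 + i \<in> J \<and> s (j0 + i) = i + 1" if "i \<le> 2*l-2" for i
      using that
    proof (induction i)
      case 0 then show ?case using j0 by simp
    next
      case (Suc i)
      define j where "j = j0 + i"
      have jJ: "j \<in> J" and sj: "s j = i + 1" using Suc j_def by auto
      have "i + 2 < C" "0 < g (i+2)" using Suc.prems l1 unfolding gdef C2 by auto
      then obtain j' where j': "j' \<in> J" "s j' = i + 2" using cover by fastforce
      have jj': "j < j'"
      proof (rule ccontr)
        assume "\<not> j < j'"
        then have "s j' \<le> s j" using s_mono by simp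
        then show False using sj j' by simp
      qed
      have j'L: "j' < L" using j' J_def by simp
      show ?case
      proof (cases "0 < a (Suc j)")
        case True
        then have "Suc j \<in> J" using jj' j'L J_def by simp
        moreover have "s (Suc j) = i + 2"
        proof -
          have "s (Suc j) \<le> s j'" using s_mono jj' by simp
          moreover have "s (Suc j) \<ge> i + 2" using s_Suc[of j] cJ[OF jJ] sj by simp
          ultimately show ?thesis using j' by simp
        qed
        ultimately show ?thesis using j_def by simp
      next
        case False
        then have "Suc j \<noteq> j'" using j' J_def by auto
        then have "Suc (Suc j) \<le> j'" using jj' by simp
        then have "s (Suc (Suc j)) \<le> s j'" using s_mono by simp
        moreover have "1 \<le> c (Suc j)"
        proof -
          have "0 < a j" using jJ J_def by simp
          then show ?thesis using H1'[of j] bac[of "Suc j"] False by simp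
        qed
        ultimately have False using s_Suc[of j] s_Suc[of "Suc j"] cJ[OF jJ] sj j' by simp
        then show ?thesis ..
      qed
    qed
    have j0pos: "1 \<le> j0"
    proof (rule ccontr)
      assume "\<not> 1 \<le> j0"
      then have "j0 = 0" by simp
      then show False using j0 J_def H2[of 0] b0 by simp
    qed
    have prof: "a (j0+i) = min (i+1) (2*l-1-i) \<and> b (j0+i) = a (j0+i) + 1" if "i \<le> 2*l-2" for i
    proof -
      have ch: "j0 + i \<in> J" "s (j0 + i) = i + 1" using chain[OF that] by auto
      have av: "a (j0+i) = min (i+1) (2*l-1-i)" using aeq[OF ch(1)] ch(2) gdef by simp
      have "c (j0 + i) = 1"
      proof (cases "i < 2*l-2")
        case True
        then have "s (j0 + Suc i) = i + 2" using chain[of "Suc i"] by simp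
        then show ?thesis using s_Suc[of "j0+i"] ch by simp
      next
        case False
        then have ii: "i = 2*l-2" using that by simp
        have "j0 + i < L" using ch J_def by simp
        then have "a (j0+i) + s (Suc (j0+i)) \<le> C" using U2 by blast
        moreover have "a (j0+i) = 1" using av ii l1 by simp
        ultimately have "1 + (i + 1) + c (j0+i) \<le> 2*l+1" using s_Suc[of "j0+i"] ch C2 by simp
        then have "c (j0+i) \<le> 1" using ii l1 by linarith
        then show ?thesis using cJ[OF ch(1)] by simp
      qed
      then show ?thesis using av bac[of "j0+i"] by simp
    qed
    have allrows: "j0 \<le> j \<and> j \<le> j0 + 2*l - 2" if "j < L" "0 < a j" for j
    proof -
      have jJ: "j \<in> J" using that J_def by simp
      define i where "i = s j - 1"
      have "i \<le> 2*l-2" using rng[OF jJ] i_def by linarith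
      then have ch: "j0 + i \<in> J" "s (j0 + i) = i + 1" using chain by auto
      have "s (j0 + i) = s j" using ch rng[OF jJ] i_def by simp
      then have "j0 + i = j" using inj ch jJ unfolding inj_on_def by blast
      then show ?thesis using \<open>i \<le> 2*l-2\<close> l1 by linarith
    qed
    show ?thesis using j0pos prof allrows by blast
  qed
  show ?thesis using part1 part2 unfolding k_def C_eq by blast
qed

lemma case1:
  fixes a b :: "nat \<Rightarrow> nat" and L h :: nat
  assumes a0: "a 0 = h" and aL: "a L = h" and L2: "L = 2*h" and L4: "4 \<le> L"
    and H1: "\<And>j. a (Suc j) \<le> b j" and H1': "\<And>j. a j \<le> b (Suc j)" and H2: "\<And>j. a j \<le> b j"
    and H4: "\<And>j. a j \<le> h"
    and H3: "\<And>j. 0 < a j \<Longrightarrow> a j < h \<Longrightarrow> a j + 1 \<le> b j"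
    and CL: "(\<Sum>j<L. (b j - a j)) + 1 \<le> L"
  shows "2*L^2 + 12 \<le> 8*(\<Sum>j<L. a j) + 4*(\<Sum>j<L. (b j - a j)) + 4*L"
proof -
  define c where "c j = b j - a j" for j
  define s where "s j = (\<Sum>i<j. c i)" for j
  define C where "C = s L"
  define k where "k = (\<Sum>j<L. a j)"
  have C_eq: "C = (\<Sum>j<L. (b j - a j))" unfolding C_def s_def c_def by simp
  have CL': "C + 1 \<le> L" using CL C_eq by simp
  have bac: "b j = a j + c j" for j using H2[of j] unfolding c_def by simp
  have s_Suc: "s (Suc j) = s j + c j" for j unfolding s_def by simp
  have s_mono: "s j \<le> s j'" if "j \<le> j'" for j j' unfolding s_def by (rule sum_mono2) (use that in auto)
  have F: "h \<le> a j + s (Suc j)" for j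
  proof (induction j)
    case 0 then show ?case using a0 by simp
  next
    case (Suc j)
    then show ?case using H1'[of j] bac[of "Suc j"] s_Suc[of "Suc j"] by simp
  qed
  have B: "h + s j \<le> a j + C" if "j \<le> L" for j
  proof -
    have "\<forall>j. j \<le> L \<longrightarrow> L - j = d \<longrightarrow> h + s j \<le> a j + C" for d
    proof (induction d)
      case 0 then show ?case using aL C_def by auto
    next
      case (Suc d)
      show ?case
      proof (intro allI impI)
        fix j assume j: "j \<le> L" "L - j = Suc d"
        then have "Suc j \<le> L" "L - Suc j = d" by auto
        then have "h + s (Suc j) \<le> a (Suc j) + C" using Suc.IH by blast
        then show "h + s j \<le> a j + C" using H1[of j] bac[of j] s_Suc[of j] by simp
      qed
    qed
    then show ?thesis using that by blast
  qed
  have touched: "1 \<le> b j" if "j < L" for j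
  proof (rule ccontr)
    assume "\<not> 1 \<le> b j"
    then have bj: "b j = 0" by simp
    have aj: "a j = 0" using H2[of j] bj by simp
    have aSj: "a (Suc j) = 0" using H1[of j] bj by simp
    have "j \<noteq> 0"
    proof
      assume "j = 0"
      then have "h = 0" using aj a0 by simp
      then show False using L2 L4 by simp
    qed
    then obtain i where i: "j = Suc i" by (cases j) auto
    have ai: "a i = 0" using H1'[of i] bj i by simp
    have f: "h \<le> s j" using F[of i] ai i by simp
    have "h + s (Suc j) \<le> C" using B[of "Suc j"] that aSj by simp
    moreover have "s j \<le> s (Suc j)" using s_mono by simp
    ultimately have "2*h \<le> C" using f by simp
    then show False using CL' L2 by simp
  qed
  have cNF: "1 \<le> c j" if "j < L" "a j < h" for j
  proof (cases "a j = 0")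
    case True then show ?thesis using touched[OF that(1)] bac[of j] by simp
  next
    case False then show ?thesis using H3[of j] that bac[of j] by simp
  qed
  define NF where "NF = {j. 1 \<le> j \<and> j < L \<and> a j < h}"
  define FF where "FF = {j. 1 \<le> j \<and> j < L \<and> a j = h}"
  have finNF: "finite NF" and finFF: "finite FF" unfolding NF_def FF_def by auto
  have UNF: "{1..<L} = NF \<union> FF" unfolding NF_def FF_def using H4 le_neq_implies_less by fastforce
  have DNF: "NF \<inter> FF = {}" unfolding NF_def FF_def by auto
  have k_split: "k = h + (\<Sum>j\<in>NF. a j) + card FF * h"
  proof -
    have "k = a 0 + (\<Sum>j\<in>{1..<L}. a j)"
      unfolding k_def using L4 by (simp add: sum.atLeast1_atMost_eq lessThan_atLeast0 sum.atLeast_Suc_lessThan)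
    also have "(\<Sum>j\<in>{1..<L}. a j) = (\<Sum>j\<in>NF. a j) + (\<Sum>j\<in>FF. a j)"
      unfolding UNF by (rule sum.union_disjoint[OF finNF finFF DNF])
    also have "(\<Sum>j\<in>FF. a j) = card FF * h" unfolding FF_def by simp
    finally show ?thesis using a0 by simp
  qed
  have card_split: "1 + card NF + card FF = L"
  proof -
    have "card {1..<L} = card NF + card FF" unfolding UNF by (rule card_Un_disjoint[OF finNF finFF DNF])
    then show ?thesis using L4 by simp
  qed
  show ?thesis
  proof (cases "NF = {}")
    case True
    then have "k = (1 + card FF) * h" using k_split by simp
    moreover have "L = 1 + card FF" using card_split True by simp
    ultimately have "k = L * h" by metis
    then have "8*k = 4*L^2" using L2 by (simp add: power2_eq_square)
    moreover have "2*L^2 + 12 \<le> 4*L^2"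
    proof -
      have "16 \<le> L^2" using L4 power_mono[of 4 L 2] by simp
      then show ?thesis by simp
    qed
    ultimately show ?thesis unfolding k_def C_eq[symmetric] by simp
  next
    case False
    define q where "q j = s (Suc j)" for j
    define g where "g p = min p (C + 1 - p)" for p
    have key: "h \<le> a j + g (q j) + (c j - 1)" if "j \<in> NF" for j
    proof -
      have j: "j < L" "a j < h" using that NF_def by auto
      have c1: "1 \<le> c j" using cNF[OF j] .
      have f1: "h \<le> a j + q j" using F[of j] q_def by simp
      have f2: "h + s j \<le> a j + C" using B[of j] j by simp
      have qs: "q j = s j + c j" using s_Suc q_def by simp
      show ?thesis unfolding g_def using f1 f2 qs c1 by auto
    qed
    have qC: "q j \<le> C" if "j \<in> NF" for j
      unfolding q_def C_def using that NF_def s_mono by auto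
    have strict: "q j < q j'" if "j \<in> NF" "j' \<in> NF" "j < j'" for j j'
    proof -
      have "q j \<le> s j'" using s_mono that(3) q_def by simp
      moreover have "1 \<le> c j'" using cNF that(2) NF_def by simp
      ultimately show ?thesis using s_Suc[of j'] q_def by simp
    qed
    have inj: "inj_on q NF"
    proof (rule inj_onI)
      fix x y assume xy: "x \<in> NF" "y \<in> NF" "q x = q y"
      show "x = y"
      proof (rule ccontr)
        assume "x \<noteq> y"
        then have "x < y \<or> y < x" by arith
        then show False using strict xy by fastforce
      qed
    qed
    have s1: "(\<Sum>j\<in>NF. h) \<le> (\<Sum>j\<in>NF. a j) + (\<Sum>j\<in>NF. g (q j)) + (\<Sum>j\<in>NF. (c j - 1))"
    proof -
      have "(\<Sum>j\<in>NF. h) \<le> (\<Sum>j\<in>NF. a j + g (q j) + (c j - 1))" by (rule sum_mono) (rule key)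
      then show ?thesis by (simp add: sum.distrib)
    qed
    have s2: "(\<Sum>j\<in>NF. g (q j)) \<le> G (C + 2)"
    proof -
      have "(\<Sum>j\<in>NF. g (q j)) = (\<Sum>p\<in>q`NF. g p)" using sum.reindex[OF inj, of g] by simp
      also have "\<dots> \<le> (\<Sum>p<C+2. g p)" by (rule sum_mono2) (auto dest: qC)
      also have "\<dots> = G (C+2)" unfolding G_def g_def by simp
      finally show ?thesis .
    qed
    have s3: "(\<Sum>j\<in>NF. (c j - 1)) + card NF \<le> C"
    proof -
      have "(\<Sum>j\<in>NF. (c j - 1)) + card NF = (\<Sum>j\<in>NF. c j)"
      proof -
        have "(\<Sum>j\<in>NF. (c j - 1)) + card NF = (\<Sum>j\<in>NF. (c j - 1) + 1)" unfolding sum.distrib by simp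
        also have "\<dots> = (\<Sum>j\<in>NF. c j)" by (rule sum.cong) (auto simp: NF_def dest: cNF)
        finally show ?thesis .
      qed
      also have "\<dots> \<le> (\<Sum>j<L. c j)" by (rule sum_mono2) (auto simp: NF_def)
      finally show ?thesis unfolding C_def s_def .
    qed
    have G4: "4 * G (C+2) \<le> L^2"
    proof -
      have "4 * G (C+2) \<le> (C+1)^2" using G_bound[of "C+2"] by simp
      also have "\<dots> \<le> L^2" using CL' power_mono[of "C+1" L 2] by simp
      finally show ?thesis .
    qed
    have p1: "1 \<le> card NF" using False finNF by (simp add: Suc_leI card_gt_0_iff)
    have main: "L * h + card NF \<le> k + G (C+2) + C"
    proof -
      have "card NF * h \<le> (\<Sum>j\<in>NF. a j) + G (C+2) + C - card NF" using s1 s2 s3 by simp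
      then have "card NF * h + card NF \<le> (\<Sum>j\<in>NF. a j) + G (C+2) + C" using s3 by linarith
      then have "(1 + card NF + card FF) * h + card NF \<le> k + G (C+2) + C"
        using k_split by (simp add: algebra_simps)
      moreover have "L = 1 + card NF + card FF" using card_split by simp
      ultimately show ?thesis by metis
    qed
    have "4 * (L * h) = 2 * L^2" using L2 by (simp add: power2_eq_square)
    then have "2 * L^2 + 4 * card NF \<le> 4 * k + L^2 + 4 * C" using main G4 by linarith
    then have "L^2 + 4 \<le> 4 * k + 4 * C" using p1 by linarith
    then have "2 * L^2 + 12 \<le> 8 * k + 4 * C + 4 * L" using CL' by linarith
    then show ?thesis unfolding k_def C_eq .
  qed
qed

lemma per_mod:
  fixes f :: "nat \<Rightarrow> 'a" and L :: nat
  assumes per: "\<And>y. f (y + L) = f y"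
  shows "f (y mod L) = f y"
proof -
  have "f (r + L * m) = f r" for r m
  proof (induction m)
    case 0 then show ?case by simp
  next
    case (Suc m)
    have "r + L * Suc m = (r + L * m) + L" by simp
    then show ?case using per Suc by metis
  qed
  then show ?thesis by (metis mod_mult_div_eq)
qed

lemma oneD:
  fixes kk nn :: "nat \<Rightarrow> nat" and L h l :: nat
  assumes L2: "L = 2*h" and Ll: "2*l+2 \<le> L" and l1: "1 \<le> l"
    and perk: "\<And>y. kk (y + L) = kk y" and pern: "\<And>y. nn (y + L) = nn y"
    and H1: "\<And>y. kk (Suc y) \<le> nn y" and H1': "\<And>y. kk y \<le> nn (Suc y)" and H2: "\<And>y. kk y \<le> nn y"
    and H3: "\<And>y. 0 < kk y \<Longrightarrow> kk y < h \<Longrightarrow> kk y + 1 \<le> nn y" and H4: "\<And>y. kk y \<le> h"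
    and big: "l^2 \<le> (\<Sum>y<L. kk y)"
    and small: "(\<Sum>y<L. kk y) + (\<Sum>y<L. nn y) \<le> 2*l^2 + 2*l + 1"
  shows "(\<Sum>y<L. kk y) = l^2 \<and> (\<Sum>y<L. nn y) = (l+1)^2 \<and>
     (\<exists>y0. (\<forall>i. 1 \<le> i \<and> i \<le> 2*l-1 \<longrightarrow> kk (y0+i) = min i (2*l-i) \<and> nn (y0+i) = kk (y0+i) + 1)
        \<and> (\<forall>y. 0 < kk y \<longrightarrow> (\<exists>i. 1 \<le> i \<and> i \<le> 2*l-1 \<and> y mod L = (y0+i) mod L)))"
proof -
  define k where "k = (\<Sum>y<L. kk y)"
  define C where "C = (\<Sum>y<L. (nn y - kk y))"
  have nsum: "(\<Sum>y<L. nn y) = k + C"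
  proof -
    have "(\<Sum>y<L. nn y) = (\<Sum>y<L. kk y + (nn y - kk y))" by (rule sum.cong) (auto simp: H2)
    then show ?thesis unfolding k_def C_def sum.distrib .
  qed
  have kb: "l^2 \<le> k" using big k_def by simp
  have ks: "2*k + C \<le> 2*l^2 + 2*l + 1" using small nsum k_def by simp
  have C1: "C \<le> 2*l+1" using kb ks by simp
  have perc: "(\<lambda>y. nn y - kk y) (y + L) = (\<lambda>y. nn y - kk y) y" for y using perk pern by simp
  have shiftk: "(\<Sum>j<L. kk (e + j)) = k" for e unfolding k_def by (rule sum_shift) (rule perk)
  have shiftC: "(\<Sum>j<L. (nn (e + j) - kk (e + j))) = C" for e
    unfolding C_def using sum_shift[of "\<lambda>y. nn y - kk y" L e] perc by simp
  show ?thesis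
  proof (cases "\<exists>f. kk f = h")
    case True
    then obtain f where f: "kk f = h" by blast
    have "2*L^2 + 12 \<le> 8*(\<Sum>j<L. kk (f+j)) + 4*(\<Sum>j<L. (nn (f+j) - kk (f+j))) + 4*L"
    proof (rule case1[where h=h])
      show "kk (f + 0) = h" using f by simp
      show "kk (f + L) = h" using f perk by simp
      show "L = 2*h" by (rule L2)
      show "4 \<le> L" using Ll l1 by simp
      show "kk (f + Suc j) \<le> nn (f + j)" for j using H1[of "f+j"] by simp
      show "kk (f + j) \<le> nn (f + Suc j)" for j using H1'[of "f+j"] by simp
      show "kk (f + j) \<le> nn (f + j)" for j using H2 by simp
      show "kk (f + j) \<le> h" for j using H4 by simp
      show "0 < kk (f + j) \<Longrightarrow> kk (f + j) < h \<Longrightarrow> kk (f + j) + 1 \<le> nn (f + j)" for j using H3 by simp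
      show "(\<Sum>j<L. (nn (f+j) - kk (f+j))) + 1 \<le> L" using shiftC C1 Ll by simp
    qed
    then have "2*L^2 + 12 \<le> 8*k + 4*C + 4*L" using shiftk shiftC by simp
    also have "\<dots> \<le> 4*(2*l^2 + 2*l + 1) + 4*L" using ks by simp
    finally have ineq: "2*L^2 + 12 \<le> 4*(2*l^2 + 2*l + 1) + 4*L" .
    obtain d where d: "L = 2*l + 2 + d" using Ll le_Suc_ex by blast
    have False using ineq unfolding d by (simp add: power2_eq_square algebra_simps)
    then show ?thesis ..
  next
    case False
    then have nf: "kk y < h" for y using H4 le_neq_implies_less by blast
    have "\<exists>e<L. nn e = 0"
    proof (rule ccontr)
      assume "\<not> (\<exists>e<L. nn e = 0)"
      then have "1 \<le> nn y - kk y" if "y < L" for y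
        using that H3[of y] nf[of y] by (cases "kk y = 0") auto
      then have "(\<Sum>y<L. (1::nat)) \<le> C" unfolding C_def by (intro sum_mono) auto
      then show False using C1 Ll by simp
    qed
    then obtain e where e: "e < L" "nn e = 0" by blast
    have c2: "(\<Sum>j<L. kk (e+j)) \<le> G (\<Sum>j<L. (nn (e+j) - kk (e+j)))
         \<and> ((\<Sum>j<L. kk (e+j)) = G (\<Sum>j<L. (nn (e+j) - kk (e+j))) \<longrightarrow> (\<Sum>j<L. (nn (e+j) - kk (e+j))) = 2*l+1 \<longrightarrow> 1 \<le> l \<longrightarrow>
            (\<exists>j0. 1 \<le> j0 \<and> (\<forall>i. i \<le> 2*l-2 \<longrightarrow> kk (e+(j0+i)) = min (i+1) (2*l-1-i) \<and> nn (e+(j0+i)) = kk (e+(j0+i)) + 1)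
                 \<and> (\<forall>j<L. 0 < kk (e+j) \<longrightarrow> j0 \<le> j \<and> j \<le> j0 + 2*l - 2)))"
    proof (rule case2)
      show "nn (e + 0) = 0" using e by simp
      show "nn (e + L) = 0" using e pern by simp
      show "kk (e + Suc j) \<le> nn (e + j)" for j using H1[of "e+j"] by simp
      show "kk (e + j) \<le> nn (e + Suc j)" for j using H1'[of "e+j"] by simp
      show "kk (e + j) \<le> nn (e + j)" for j using H2 by simp
      show "0 < kk (e + j) \<Longrightarrow> kk (e + j) + 1 \<le> nn (e + j)" for j using H3 nf by simp
    qed
    then have kG: "k \<le> G C" using shiftk shiftC by simp
    have G4: "4 * G C \<le> (C - 1)^2" by (rule G_bound)
    have CC: "C = 2*l+1"
    proof (rule ccontr)
      assume "C \<noteq> 2*l+1"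
      then have "C \<le> 2*l" using C1 by simp
      then have p1: "(C - 1)^2 \<le> (2*l - 1)^2" by (intro power_mono) auto
      have p2: "(2*l - 1)^2 < (2*l)^2" by (rule power_strict_mono) (use l1 in auto)
      have p3: "(2*l)^2 = 4 * l^2" by (simp add: power_mult_distrib)
      have "4 * k < 4 * l^2" using kG G4 p1 p2 p3 by linarith
      then show False using kb by simp
    qed
    have "4 * k \<le> 4 * l^2" using kG G4 CC by (simp add: power_mult_distrib)
    then have kl: "k = l^2" using kb by simp
    have kGC: "k = G C"
    proof -
      have "4 * G C \<le> 4 * l^2" using G4 CC by (simp add: power_mult_distrib)
      then show ?thesis using kl kG by simp
    qed
    obtain j0 where j0: "1 \<le> j0"
      "\<And>i. i \<le> 2*l-2 \<Longrightarrow> kk (e+(j0+i)) = min (i+1) (2*l-1-i) \<and> nn (e+(j0+i)) = kk (e+(j0+i)) + 1"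
      "\<And>j. j<L \<Longrightarrow> 0 < kk (e+j) \<Longrightarrow> j0 \<le> j \<and> j \<le> j0 + 2*l - 2"
      using c2 kGC CC l1 shiftk shiftC by auto
    define y0 where "y0 = e + j0 - 1"
    have prof: "kk (y0+i) = min i (2*l-i) \<and> nn (y0+i) = kk (y0+i) + 1" if "1 \<le> i" "i \<le> 2*l-1" for i
    proof -
      have "i - 1 \<le> 2*l-2" using that by simp
      moreover have "e + (j0 + (i - 1)) = y0 + i" unfolding y0_def using that j0(1) by simp
      moreover have "min (i - 1 + 1) (2*l-1-(i-1)) = min i (2*l-i)" using that by simp
      ultimately show ?thesis using j0(2)[of "i-1"] by simp
    qed
    have rows: "\<exists>i. 1 \<le> i \<and> i \<le> 2*l-1 \<and> y mod L = (y0+i) mod L" if "0 < kk y" for y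
    proof -
      define j where "j = (y + L - e) mod L"
      have jL: "j < L" unfolding j_def using e by simp
      have ej: "(e + j) mod L = y mod L"
      proof -
        have "(e + j) mod L = (e + (y + L - e)) mod L" unfolding j_def by (simp add: mod_add_right_eq)
        also have "e + (y + L - e) = y + L" using e by simp
        finally show ?thesis by simp
      qed
      have "kk (e + j) = kk y" using per_mod[of kk L "e+j", OF perk] per_mod[of kk L y, OF perk] ej by simp
      then have "j0 \<le> j \<and> j \<le> j0 + 2*l - 2" using j0(3)[OF jL] that by simp
      then have "1 \<le> j - j0 + 1 \<and> j - j0 + 1 \<le> 2*l-1 \<and> y0 + (j - j0 + 1) = e + j"
        unfolding y0_def using j0(1) l1 by auto
      then show ?thesis using ej by metis
    qed
    show ?thesis using kl nsum CC k_def prof rows by (auto simp: power2_eq_square)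
  qed
qed

lemma even_mod_nat: "even (L::nat) \<Longrightarrow> even (a mod L) = even a"
  by (metis dvd_mod_iff even_mod_2_iff mod_mod_cancel)

lemma even_mod_int: "even (L::int) \<Longrightarrow> even (a mod L) = even a"
  by (metis dvd_mod_iff even_mod_2_iff mod_mod_cancel)

lemma par_succ: "even L \<Longrightarrow> odd (Suc x mod L + y) \<longleftrightarrow> even (x + y)"
  using even_mod_nat[of L "Suc x"] by auto

lemma par_pred: "even L \<Longrightarrow> 0 < L \<Longrightarrow> x < L \<Longrightarrow> odd ((x + L - Suc 0) mod L + y) \<longleftrightarrow> even (x + y)"
  using even_mod_nat[of L "x + L - Suc 0"] by auto

lemma adj_parity:
  assumes ev: "even L" and L2: "2 \<le> L" and a: "adj L v w"
  shows "odd (fst v + snd v) \<longleftrightarrow> even (fst w + snd w)"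
proof -
  obtain x y where v: "v = (x, y)" by (cases v)
  have h: "x < L" "y < L" "w = (Suc x mod L, y) \<or> w = ((x + L - 1) mod L, y) \<or>
      w = (x, Suc y mod L) \<or> w = (x, (y + L - 1) mod L)" using adj_char[OF L2] a v by auto
  have L0: "0 < L" using L2 by simp
  from h(3) show ?thesis
  proof (elim disjE)
    assume w: "w = (Suc x mod L, y)"
    show ?thesis using par_succ[OF ev, of x y] unfolding v w by auto
  next
    assume w: "w = ((x + L - 1) mod L, y)"
    show ?thesis using par_pred[OF ev L0 h(1), of y] unfolding v w by auto
  next
    assume w: "w = (x, Suc y mod L)"
    show ?thesis using par_succ[OF ev, of y x] unfolding v w by (auto simp: add.commute)
  next
    assume w: "w = (x, (y + L - 1) mod L)"
    show ?thesis using par_pred[OF ev L0 h(2), of x] unfolding v w by (auto simp: add.commute)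
  qed
qed

lemma adj_sites: "adj L v w \<Longrightarrow> v \<in> sites L \<and> w \<in> sites L"
  unfolding adj_def by simp

lemma adj_odd_even:
  assumes "even L" "2 \<le> L" "adj L v w"
  shows "v \<in> odd_sites L \<longleftrightarrow> w \<in> even_sites L"
  using adj_parity[OF assms] adj_sites[OF assms(3)] unfolding odd_sites_def even_sites_def by auto

lemma adj_even_odd:
  assumes "even L" "2 \<le> L" "adj L v w"
  shows "v \<in> even_sites L \<longleftrightarrow> w \<in> odd_sites L"
  using adj_parity[OF assms] adj_sites[OF assms(3)] unfolding odd_sites_def even_sites_def by auto

definition Ks :: "nat \<Rightarrow> site set \<Rightarrow> nat \<Rightarrow> nat set" where
  "Ks L A y = {x. (x, y mod L) \<in> A}"

definition pm :: "nat \<Rightarrow> nat set \<Rightarrow> nat set" where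
  "pm L X = (\<lambda>x. Suc x mod L) ` X \<union> (\<lambda>x. (x + L - 1) mod L) ` X"

lemma Ks_per: "Ks L A (y + L) = Ks L A y"
  unfolding Ks_def by simp

lemma Ks_mod: "Ks L A (y mod L) = Ks L A y"
  unfolding Ks_def by simp

lemma Ks_sub: "A \<subseteq> sites L \<Longrightarrow> Ks L A y \<subseteq> {..<L}"
proof
  fix x assume "A \<subseteq> sites L" "x \<in> Ks L A y"
  then have "(x, y mod L) \<in> sites L" unfolding Ks_def by auto
  then show "x \<in> {..<L}" unfolding sites_def by simp
qed

lemma Ks_fin: "A \<subseteq> sites L \<Longrightarrow> finite (Ks L A y)"
  by (rule finite_subset[OF Ks_sub]) auto

lemma modpred_succ: "0 < L \<Longrightarrow> (Suc y mod L + L - 1) mod L = y mod L"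
proof -
  assume L0: "0 < L"
  define z where "z = y mod L"
  have z: "z < L" using L0 z_def by simp
  have "Suc y mod L = Suc z mod L" unfolding z_def by (simp add: mod_Suc_eq)
  moreover have "(Suc z mod L + L - 1) mod L = z"
  proof (cases "Suc z = L")
    case True then show ?thesis using z by simp
  next
    case False
    then have "Suc z mod L = Suc z" using z by simp
    moreover have "(Suc z + L - 1) mod L = z" using z by simp
    ultimately show ?thesis by simp
  qed
  ultimately show ?thesis unfolding z_def by simp
qed

lemma ext_boundary_mem:
  assumes ev: "even L" and L2: "2 \<le> L" and K: "K \<subseteq> odd_sites L" and v: "v \<in> K" and a: "adj L v w"
  shows "w \<in> ext_boundary L K"
proof -
  have "w \<in> even_sites L" using adj_odd_even[OF ev L2 a] v K by auto
  then have "w \<notin> K" using K unfolding odd_sites_def even_sites_def by auto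
  then show ?thesis unfolding ext_boundary_def using adj_sites[OF a] v a by auto
qed


lemma inj_succ: fixes L :: nat shows "inj_on (\<lambda>x. Suc x mod L) {..<L}"
  by (rule inj_onI) (auto simp: mod_succ split: if_splits)

lemma inj_pred: fixes L :: nat shows "inj_on (\<lambda>x. (x + L - 1) mod L) {..<L}"
proof (rule inj_onI)
  fix x y assume "x \<in> {..<L}" "y \<in> {..<L}" "(x + L - 1) mod L = (y + L - 1) mod L"
  then show "x = y" using mod_pred[of x L] mod_pred[of y L] by (auto split: if_splits)
qed

lemma card_class:
  fixes L c :: nat
  assumes ev: "even L"
  shows "card {x. x < L \<and> odd (x + c)} = L div 2"
proof -
  define Ao where "Ao = {x. x < L \<and> odd (x + c)}"
  define Ae where "Ae = {x. x < L \<and> even (x + c)}"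
  have fo: "finite Ao" and fe: "finite Ae" unfolding Ao_def Ae_def by auto
  have "(\<lambda>x. Suc x mod L) ` Ao \<subseteq> Ae"
  proof
    fix z assume "z \<in> (\<lambda>x. Suc x mod L) ` Ao"
    then obtain x where "x \<in> Ao" "z = Suc x mod L" by auto
    then show "z \<in> Ae" unfolding Ao_def Ae_def using par_succ[OF ev, of x c] by auto
  qed
  moreover have "inj_on (\<lambda>x. Suc x mod L) Ao"
    using inj_succ by (rule inj_on_subset) (auto simp: Ao_def)
  ultimately have c1: "card Ao \<le> card Ae" using card_inj_on_le fe by blast
  have "(\<lambda>x. Suc x mod L) ` Ae \<subseteq> Ao"
  proof
    fix z assume "z \<in> (\<lambda>x. Suc x mod L) ` Ae"
    then obtain x where "x \<in> Ae" "z = Suc x mod L" by auto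
    then show "z \<in> Ao" unfolding Ao_def Ae_def using par_succ[OF ev, of x c] by auto
  qed
  moreover have "inj_on (\<lambda>x. Suc x mod L) Ae"
    using inj_succ by (rule inj_on_subset) (auto simp: Ae_def)
  ultimately have c2: "card Ae \<le> card Ao" using card_inj_on_le fo by blast
  have "Ao \<union> Ae = {..<L}" "Ao \<inter> Ae = {}" unfolding Ao_def Ae_def by auto
  then have "card Ao + card Ae = L" using card_Un_disjoint[OF fo fe] by simp
  then show ?thesis using c1 c2 Ao_def by simp
qed

lemma card_rows:
  assumes "A \<subseteq> sites L"
  shows "card A = (\<Sum>y<L. card (Ks L A y))"
proof -
  have fin: "finite A" using assms finite_subset unfolding sites_def by (metis finite_SigmaI finite_atLeastLessThan)
  have eq: "A = (\<lambda>(y, x). (x, y)) ` (SIGMA y:{..<L}. Ks L A y)"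
  proof
    show "A \<subseteq> (\<lambda>(y, x). (x, y)) ` (SIGMA y:{..<L}. Ks L A y)"
    proof
      fix v assume v: "v \<in> A"
      obtain x y where xy: "v = (x, y)" by (cases v)
      have "y < L" using v xy assms unfolding sites_def by auto
      then have "x \<in> Ks L A y" using v xy unfolding Ks_def by simp
      then show "v \<in> (\<lambda>(y, x). (x, y)) ` (SIGMA y:{..<L}. Ks L A y)" using xy \<open>y < L\<close> by force
    qed
    show "(\<lambda>(y, x). (x, y)) ` (SIGMA y:{..<L}. Ks L A y) \<subseteq> A"
      unfolding Ks_def by auto
  qed
  have inj: "inj_on (\<lambda>(y, x). (x, y)) (SIGMA y:{..<L}. Ks L A y)"
    by (rule inj_onI) auto
  have "card A = card (SIGMA y:{..<L}. Ks L A y)"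
    by (subst eq) (rule card_image[OF inj])
  also have "\<dots> = (\<Sum>y<L. card (Ks L A y))"
    by (rule card_SigmaI) (auto intro: Ks_fin[OF assms])
  finally show ?thesis .
qed

context
  fixes L :: nat and K :: "site set"
  assumes ev: "even L" and L4: "4 \<le> L" and K: "K \<subseteq> odd_sites L"
begin

lemma L2: "2 \<le> L" using L4 by simp
lemma L0: "0 < L" using L4 by simp

lemma Ksites: "K \<subseteq> sites L" using K unfolding odd_sites_def by auto

lemma row_up: "Ks L K (Suc y) \<subseteq> Ks L (ext_boundary L K) y"
proof
  fix x assume "x \<in> Ks L K (Suc y)"
  then have v: "(x, Suc y mod L) \<in> K" unfolding Ks_def by simp
  then have xL: "x < L" using Ksites unfolding sites_def by auto
  have "adj L (x, Suc y mod L) (x, (Suc y mod L + L - 1) mod L)"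
    using adj_char[OF L2] xL L0 by simp
  then have "adj L (x, Suc y mod L) (x, y mod L)" using modpred_succ[OF L0] by simp
  then have "(x, y mod L) \<in> ext_boundary L K" using ext_boundary_mem[OF ev L2 K v] by simp
  then show "x \<in> Ks L (ext_boundary L K) y" unfolding Ks_def by simp
qed

lemma row_down: "Ks L K y \<subseteq> Ks L (ext_boundary L K) (Suc y)"
proof
  fix x assume "x \<in> Ks L K y"
  then have v: "(x, y mod L) \<in> K" unfolding Ks_def by simp
  then have xL: "x < L" using Ksites unfolding sites_def by auto
  have "adj L (x, y mod L) (x, Suc (y mod L) mod L)"
    using adj_char[OF L2] xL L0 by simp
  then have "adj L (x, y mod L) (x, Suc y mod L)" by (simp add: mod_Suc_eq)
  then have "(x, Suc y mod L) \<in> ext_boundary L K" using ext_boundary_mem[OF ev L2 K v] by simp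
  then show "x \<in> Ks L (ext_boundary L K) (Suc y)" unfolding Ks_def by simp
qed

lemma row_pm: "pm L (Ks L K y) \<subseteq> Ks L (ext_boundary L K) y"
proof
  fix z assume "z \<in> pm L (Ks L K y)"
  then obtain x where x: "x \<in> Ks L K y" and z: "z = Suc x mod L \<or> z = (x + L - 1) mod L"
    unfolding pm_def by auto
  then have v: "(x, y mod L) \<in> K" unfolding Ks_def by simp
  then have xL: "x < L" using Ksites unfolding sites_def by auto
  have "adj L (x, y mod L) (z, y mod L)"
    using z
  proof
    assume "z = Suc x mod L" then show ?thesis using adj_char[OF L2, of x "y mod L"] xL L0 by simp
  next
    assume "z = (x + L - 1) mod L" then show ?thesis using adj_char[OF L2, of x "y mod L"] xL L0 by simp
  qed
  then have "(z, y mod L) \<in> ext_boundary L K" using ext_boundary_mem[OF ev L2 K v] by simp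
  then show "z \<in> Ks L (ext_boundary L K) y" unfolding Ks_def by simp
qed


lemma row_class: "Ks L K y \<subseteq> {x. x < L \<and> odd (x + y mod L)}"
  using K unfolding Ks_def odd_sites_def sites_def by auto

lemma row_le: "card (Ks L K y) \<le> L div 2"
  using card_mono[OF _ row_class] card_class[OF ev] by (metis finite_Collect_conjI finite_lessThan lessThan_def)

lemma card_pm:
  assumes pos: "0 < card (Ks L K y)" and lt: "card (Ks L K y) < L div 2"
  shows "card (Ks L K y) + 1 \<le> card (pm L (Ks L K y))"
proof -
  define A where "A = Ks L K y"
  have AL: "A \<subseteq> {..<L}" unfolding A_def using Ks_sub[OF Ksites] .
  have fA: "finite A" unfolding A_def using Ks_fin[OF Ksites] .
  have "\<exists>x\<in>A. Suc (Suc x) mod L \<notin> A"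
  proof (rule ccontr)
    assume "\<not> (\<exists>x\<in>A. Suc (Suc x) mod L \<notin> A)"
    then have cl: "\<And>x. x \<in> A \<Longrightarrow> Suc (Suc x) mod L \<in> A" by blast
    obtain a where a: "a \<in> A" using pos unfolding A_def by (metis card.empty ex_in_conv less_irrefl)
    have it: "(a + 2 * t) mod L \<in> A" for t
    proof (induction t)
      case 0 then show ?case using a AL by auto
    next
      case (Suc t)
      have "(a + 2 * Suc t) mod L = Suc (Suc ((a + 2 * t) mod L)) mod L" 
      proof -
        have "Suc (Suc (m mod L)) mod L = Suc (Suc m) mod L" for m by (metis mod_Suc_eq)
        then show ?thesis by simp
      qed
      then show ?case using cl[OF Suc] by simp
    qed
    have aL: "a < L" using a AL by auto
    have ca: "odd (a + y mod L)" using a row_class unfolding A_def by auto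
    have "{x. x < L \<and> odd (x + y mod L)} \<subseteq> A"
    proof
      fix x assume x: "x \<in> {x. x < L \<and> odd (x + y mod L)}"
      then have xL: "x < L" and cx: "odd (x + y mod L)" by auto
      have evd: "even (x + L - a)" using ca cx ev aL by auto
      then have "even ((x + L - a) mod L)" using even_mod_nat[OF ev] by simp
      then obtain t where t: "(x + L - a) mod L = 2 * t" by (auto elim: evenE)
      have "(a + 2 * t) mod L = (a + (x + L - a) mod L) mod L" using t by simp
      also have "\<dots> = (a + (x + L - a)) mod L" by (simp add: mod_add_right_eq)
      also have "a + (x + L - a) = x + L" using aL by simp
      finally have "(a + 2 * t) mod L = x" using xL by simp
      then show "x \<in> A" using it[of t] by simp
    qed
    then have "L div 2 \<le> card A" using card_mono[OF fA] card_class[OF ev] by metis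
    then show False using lt unfolding A_def by simp
  qed
  then obtain x where x: "x \<in> A" "Suc (Suc x) mod L \<notin> A" by blast
  define z where "z = Suc x mod L"
  have zL: "z < L" using L0 z_def by simp
  have z1: "z \<in> pm L A" unfolding pm_def z_def using x by auto
  have z2: "z \<notin> (\<lambda>x. (x + L - 1) mod L) ` A"
  proof
    assume "z \<in> (\<lambda>x. (x + L - 1) mod L) ` A"
    then obtain w where w: "w \<in> A" "z = (w + L - 1) mod L" by auto
    have wL: "w < L" using w AL by auto
    have "w = Suc z mod L" using succ_pred_iff[OF zL wL] w by simp
    then have "w = Suc (Suc x) mod L" unfolding z_def by (simp add: mod_Suc_eq)
    then show False using w x by simp
  qed
  have sub: "insert z ((\<lambda>x. (x + L - 1) mod L) ` A) \<subseteq> pm L A" using z1 unfolding pm_def by auto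
  have finpm: "finite (pm L A)" unfolding pm_def using fA by simp
  have "card (insert z ((\<lambda>x. (x + L - 1) mod L) ` A)) = card A + 1"
  proof -
    have "card ((\<lambda>x. (x + L - 1) mod L) ` A) = card A"
      using card_image inj_on_subset[OF inj_pred AL] by blast
    then show ?thesis using z2 fA by simp
  qed
  then show ?thesis using card_mono[OF finpm sub] unfolding A_def by simp
qed

end


definition ap :: "nat \<Rightarrow> int \<Rightarrow> nat \<Rightarrow> nat set" where
  "ap L c t = {nat ((c - int t + 1 + 2 * int m) mod int L) | m. m < t}"

lemma nat_succ_int:
  assumes "0 < L"
  shows "Suc (nat (X mod int L)) mod L = nat ((X + 1) mod int L)"
proof -
  define n where "n = nat (X mod int L)"
  have n: "int n = X mod int L" unfolding n_def using assms by simp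
  have "int (Suc n mod L) = (int n + 1) mod int L" by (simp add: of_nat_mod add.commute)
  also have "\<dots> = (X + 1) mod int L" unfolding n by (simp add: mod_add_left_eq)
  finally show ?thesis unfolding n_def[symmetric] by (metis nat_int)
qed

lemma nat_pred_int:
  assumes "0 < L"
  shows "(nat (X mod int L) + L - 1) mod L = nat ((X - 1) mod int L)"
proof -
  define n where "n = nat (X mod int L)"
  have n: "int n = X mod int L" unfolding n_def using assms by simp
  have "int ((n + L - 1) mod L) = (int n + int L - 1) mod int L" using assms by (simp add: of_nat_mod of_nat_diff)
  also have "\<dots> = (X mod int L + (int L - 1)) mod int L" unfolding n by (simp add: algebra_simps)
  also have "\<dots> = (X + (int L - 1)) mod int L" by (simp add: mod_add_left_eq)
  also have "\<dots> = ((X - 1) + int L) mod int L" by (simp add: algebra_simps)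
  also have "\<dots> = (X - 1) mod int L" by simp
  finally show ?thesis unfolding n_def[symmetric] by (metis nat_int)
qed

lemma ap_dilate:
  assumes "0 < L"
  shows "pm L (ap L c t) \<subseteq> ap L c (Suc t)"
proof
  fix z assume "z \<in> pm L (ap L c t)"
  then obtain x where x: "x \<in> ap L c t" and z: "z = Suc x mod L \<or> z = (x + L - 1) mod L"
    unfolding pm_def by auto
  from x obtain m where m: "m < t" "x = nat ((c - int t + 1 + 2 * int m) mod int L)"
    unfolding ap_def by auto
  from z show "z \<in> ap L c (Suc t)"
  proof
    assume "z = Suc x mod L"
    then have "z = nat ((c - int t + 1 + 2 * int m + 1) mod int L)" using m nat_succ_int[OF assms] by simp
    also have "c - int t + 1 + 2 * int m + 1 = c - int (Suc t) + 1 + 2 * int (Suc m)" by simp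
    finally show ?thesis unfolding ap_def using m by blast
  next
    assume "z = (x + L - 1) mod L"
    then have "z = nat ((c - int t + 1 + 2 * int m - 1) mod int L)" using m nat_pred_int[OF assms] by simp
    also have "c - int t + 1 + 2 * int m - 1 = c - int (Suc t) + 1 + 2 * int m" by simp
    finally show ?thesis unfolding ap_def using m by auto
  qed
qed

lemma small_dvd_zero:
  fixes z :: int
  assumes "int L dvd z" "\<bar>z\<bar> < int L"
  shows "z = 0"
proof (rule ccontr)
  assume "z \<noteq> 0"
  then have "\<bar>int L\<bar> \<le> \<bar>z\<bar>" using dvd_imp_le_int assms(1) by blast
  then show False using assms(2) by simp
qed

lemma ap_erode:
  assumes L0: "0 < L" and bL: "b < L" and s1: "Suc b mod L \<in> ap L c t"
    and s2: "(b + L - 1) mod L \<in> ap L c t" and tL: "2 * t + 2 \<le> L"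
  shows "b \<in> ap L c (t - 1)"
proof -
  have bb: "b = nat (int b mod int L)" using bL by simp
  obtain m where m: "m < t" "Suc b mod L = nat ((c - int t + 1 + 2 * int m) mod int L)"
    using s1 unfolding ap_def by auto
  obtain m' where m': "m' < t" "(b + L - 1) mod L = nat ((c - int t + 1 + 2 * int m') mod int L)"
    using s2 unfolding ap_def by auto
  have e1: "(int b + 1) mod int L = (c - int t + 1 + 2 * int m) mod int L"
  proof -
    have "nat ((int b + 1) mod int L) = nat ((c - int t + 1 + 2 * int m) mod int L)"
      using m(2) nat_succ_int[OF L0, of "int b"] bb by simp
    then show ?thesis using L0 by (simp add: nat_eq_iff2)
  qed
  have e2: "(int b - 1) mod int L = (c - int t + 1 + 2 * int m') mod int L"
  proof -
    have "nat ((int b - 1) mod int L) = nat ((c - int t + 1 + 2 * int m') mod int L)"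
      using m'(2) nat_pred_int[OF L0, of "int b"] bb by simp
    then show ?thesis using L0 by (simp add: nat_eq_iff2)
  qed
  have d1: "int L dvd (int b + 1) - (c - int t + 1 + 2 * int m)" using e1 mod_eq_dvd_iff by blast
  have d2: "int L dvd (int b - 1) - (c - int t + 1 + 2 * int m')" using e2 mod_eq_dvd_iff by blast
  have eq: "((int b + 1) - (c - int t + 1 + 2 * int m)) - ((int b - 1) - (c - int t + 1 + 2 * int m'))
       = 2 * (int m' - int m + 1)" by simp
  have d3: "int L dvd 2 * (int m' - int m + 1)" using dvd_diff[OF d1 d2] by (simp only: eq)
  have "\<bar>2 * (int m' - int m + 1)\<bar> < int L" using m(1) m'(1) tL by auto
  then have "2 * (int m' - int m + 1) = 0" using small_dvd_zero d3 by blast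
  then have mm: "int m = int m' + 1" by simp
  then have m't: "m' < t - 1" using m(1) by simp
  have "(int b) mod int L = (int b - 1 + 1) mod int L" by simp
  also have "\<dots> = ((c - int t + 1 + 2 * int m') + 1) mod int L" using e2 by (metis mod_add_left_eq)
  also have "(c - int t + 1 + 2 * int m') + 1 = c - int (t - 1) + 1 + 2 * int m'" using m(1) by simp
  finally have "b = nat ((c - int (t - 1) + 1 + 2 * int m') mod int L)" using bb by simp
  then show ?thesis unfolding ap_def using m't by blast
qed

lemma in_rhombus:
  fixes c :: int and y0 l L i t m :: nat
  assumes L0: "0 < L" and i1: "1 \<le> i" and i2: "i \<le> 2*l - 1"
    and t: "t = (if i \<le> l then i else 2*l - i)" and mt: "m < t"
  shows "(nat ((c - int t + 1 + 2 * int m) mod int L), (y0 + i) mod L)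
     \<in> rhombus_core L l l (nat ((c - int l + 1) mod int L), (y0 + l) mod L)"
proof -
  define e1 where "e1 = nat ((c - int l + 1) mod int L)"
  define e2 where "e2 = (y0 + l) mod L"
  have ie1: "int e1 = (c - int l + 1) mod int L" unfolding e1_def using L0 by simp
  have ie2: "int e2 = (int y0 + int l) mod int L" unfolding e2_def by (simp add: of_nat_mod)
  obtain k j where kj: "k < l" "j < l" "int k + int j = int l - int t + 2 * int m" "int k - int j = int i - int l"
  proof (cases "i \<le> l")
    case True
    then have "m < i" using mt t by simp
    then show ?thesis using that[of m "l - i + m"] True t by auto
  next
    case False
    then have "m < 2*l - i" using mt t by simp
    then show ?thesis using that[of "i - l + m" m] False t i2 by auto
  qed
  have x: "nat ((int e1 + int k + int j) mod int L) = nat ((c - int t + 1 + 2 * int m) mod int L)"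
  proof -
    have "(int e1 + int k + int j) mod int L = ((c - int l + 1) + (int k + int j)) mod int L"
      unfolding ie1 by (simp add: mod_add_left_eq add.assoc)
    also have "(c - int l + 1) + (int k + int j) = c - int t + 1 + 2 * int m" using kj(3) by simp
    finally show ?thesis by simp
  qed
  have y: "nat ((int e2 + int k - int j) mod int L) = (y0 + i) mod L"
  proof -
    have q: "int e2 + int k - int j = (int y0 + int l) mod int L + (int k - int j)" unfolding ie2 by simp
    have "(int e2 + int k - int j) mod int L = ((int y0 + int l) + (int k - int j)) mod int L"
      by (subst q) (rule mod_add_left_eq)
    also have "(int y0 + int l) + (int k - int j) = int (y0 + i)" using kj(4) by simp
    finally have "(int e2 + int k - int j) mod int L = int ((y0 + i) mod L)" by (simp add: of_nat_mod)
    then show ?thesis by simp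
  qed
  have pe: "(nat ((c - int t + 1 + 2 * int m) mod int L), (y0 + i) mod L) =
     (nat ((int e1 + int k + int j) mod int L), nat ((int e2 + int k - int j) mod int L))" using x y by simp
  show ?thesis unfolding rhombus_core_def e1_def[symmetric] e2_def[symmetric] fst_conv snd_conv
    using pe kj(1,2) by blast
qed

lemma rhombus_core_image:
  "rhombus_core L l1 l2 \<eta> = (\<lambda>(k, j). (nat ((int (fst \<eta>) + int k + int j) mod int L),
       nat ((int (snd \<eta>) + int k - int j) mod int L))) ` ({..<l1} \<times> {..<l2})"
  unfolding rhombus_core_def by auto

lemma card_rhombus_le: "card (rhombus_core L l l \<eta>) \<le> l^2"
proof -
  have "card (rhombus_core L l l \<eta>) \<le> card ({..<l} \<times> {..<l})"
    unfolding rhombus_core_image by (rule card_image_le) simp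
  then show ?thesis by (simp add: power2_eq_square)
qed

lemma finite_rhombus: "finite (rhombus_core L l1 l2 \<eta>)"
  unfolding rhombus_core_image by simp

lemma adj_within_sym: "(a, b) \<in> adj_within L A \<Longrightarrow> (b, a) \<in> adj_within L A"
  unfolding adj_within_def using adj_sym[of L a b] by simp

lemma rtrancl_sym_adj: "(a, b) \<in> (adj_within L A)\<^sup>* \<Longrightarrow> (b, a) \<in> (adj_within L A)\<^sup>*"
proof (induction rule: rtrancl_induct)
  case base then show ?case by simp
next
  case (step y z)
  then show ?case using adj_within_sym[of y z] converse_rtrancl_into_rtrancl[of z y] by blast
qed

lemma comp_mem: "C \<in> components L A \<Longrightarrow> \<exists>v\<in>A. C = {w \<in> A. (v, w) \<in> (adj_within L A)\<^sup>*}"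
  unfolding components_def by auto

lemma comp_sub: "C \<in> components L A \<Longrightarrow> C \<subseteq> A"
  using comp_mem by blast

lemma comp_disj:
  assumes "C1 \<in> components L A" "C2 \<in> components L A" "C1 \<noteq> C2"
  shows "C1 \<inter> C2 = {}"
proof (rule ccontr)
  assume "C1 \<inter> C2 \<noteq> {}"
  then obtain w where w: "w \<in> C1" "w \<in> C2" by blast
  obtain v1 where v1: "v1 \<in> A" "C1 = {w \<in> A. (v1, w) \<in> (adj_within L A)\<^sup>*}" using comp_mem[OF assms(1)] by blast
  obtain v2 where v2: "v2 \<in> A" "C2 = {w \<in> A. (v2, w) \<in> (adj_within L A)\<^sup>*}" using comp_mem[OF assms(2)] by blast
  have "(v1, w) \<in> (adj_within L A)\<^sup>*" "(v2, w) \<in> (adj_within L A)\<^sup>*" using w v1 v2 by auto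
  then have a: "(v1, v2) \<in> (adj_within L A)\<^sup>*" "(v2, v1) \<in> (adj_within L A)\<^sup>*"
    using rtrancl_sym_adj[of v2 w] rtrancl_sym_adj[of v1 w] rtrancl_trans[of v1 w _ v2] rtrancl_trans[of v2 w _ v1]
    by auto
  have "C1 = C2"
  proof
    show "C1 \<subseteq> C2" unfolding v1(2) v2(2) using a(2) rtrancl_trans[of v2 v1] by auto
    show "C2 \<subseteq> C1" unfolding v1(2) v2(2) using a(1) rtrancl_trans[of v1 v2] by auto
  qed
  then show False using assms(3) by simp
qed

lemma comp_closed:
  assumes "C \<in> components L A" "v \<in> C" "w \<in> A" "adj L v w"
  shows "w \<in> C"
proof -
  obtain u where u: "u \<in> A" "C = {w \<in> A. (u, w) \<in> (adj_within L A)\<^sup>*}" using comp_mem[OF assms(1)] by blast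
  have "(v, w) \<in> adj_within L A" using assms comp_sub unfolding adj_within_def by blast
  moreover have "(u, v) \<in> (adj_within L A)\<^sup>*" using assms(2) u by simp
  ultimately have "(u, w) \<in> (adj_within L A)\<^sup>*" by (rule rtrancl_into_rtrancl[rotated])
  then show ?thesis using assms(3) u by simp
qed

lemma comp_Union: "\<Union>(components L A) = A"
proof
  show "\<Union>(components L A) \<subseteq> A" using comp_sub by blast
  show "A \<subseteq> \<Union>(components L A)"
  proof
    fix v assume v: "v \<in> A"
    then have "v \<in> {w \<in> A. (v, w) \<in> (adj_within L A)\<^sup>*}" by simp
    moreover have "{w \<in> A. (v, w) \<in> (adj_within L A)\<^sup>*} \<in> components L A"
      unfolding components_def using v by blast
    ultimately show "v \<in> \<Union>(components L A)" by blast
  qed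
qed

lemma comp_finite:
  assumes "finite A"
  shows "finite (components L A)"
proof -
  have "components L A \<subseteq> Pow A" using comp_sub by blast
  moreover have "finite (Pow A)" using assms by simp
  ultimately show ?thesis by (rule finite_subset)
qed

lemma comp_connected:
  assumes "v0 \<in> A" "\<And>w. w \<in> A \<Longrightarrow> (v0, w) \<in> (adj_within L A)\<^sup>*"
  shows "components L A = {A}"
proof -
  have "{w \<in> A. (v, w) \<in> (adj_within L A)\<^sup>*} = A" if "v \<in> A" for v
  proof -
    have vv: "(v, v0) \<in> (adj_within L A)\<^sup>*" using assms(2)[OF that] rtrancl_sym_adj by blast
    show ?thesis
    proof
      show "{w \<in> A. (v, w) \<in> (adj_within L A)\<^sup>*} \<subseteq> A" by blast
      show "A \<subseteq> {w \<in> A. (v, w) \<in> (adj_within L A)\<^sup>*}"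
      proof
        fix w assume "w \<in> A"
        then have "(v0, w) \<in> (adj_within L A)\<^sup>*" using assms(2) by blast
        then have "(v, w) \<in> (adj_within L A)\<^sup>*" using vv by (rule rtrancl_trans[rotated])
        then show "w \<in> {w \<in> A. (v, w) \<in> (adj_within L A)\<^sup>*}" using \<open>w \<in> A\<close> by simp
      qed
    qed
  qed
  then show ?thesis unfolding components_def using assms(1) by blast
qed


lemma nbrs_eq:
  assumes "2 \<le> L" "x < L" "y < L"
  shows "{w. adj L (x, y) w} = {(Suc x mod L, y), ((x + L - 1) mod L, y), (x, Suc y mod L), (x, (y + L - 1) mod L)}"
  using adj_char[OF assms(1), of x y] assms(2,3) by auto

lemma succ_ne_pred: fixes L :: nat shows "3 \<le> L \<Longrightarrow> x < L \<Longrightarrow> Suc x mod L \<noteq> (x + L - 1) mod L"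
  by (auto simp: mod_succ mod_pred)

lemma succ_ne: fixes L :: nat shows "2 \<le> L \<Longrightarrow> x < L \<Longrightarrow> Suc x mod L \<noteq> x"
  by (auto simp: mod_succ)

lemma pred_ne: fixes L :: nat shows "2 \<le> L \<Longrightarrow> x < L \<Longrightarrow> (x + L - 1) mod L \<noteq> x"
  by (auto simp: mod_pred)

lemma nbrs4:
  assumes L3: "3 \<le> L" and v: "v \<in> sites L"
  shows "card {w. adj L v w} = 4"
proof -
  obtain x y where xy: "v = (x, y)" by (cases v)
  have xL: "x < L" and yL: "y < L" using v xy unfolding sites_def by auto
  have L2: "2 \<le> L" using L3 by simp
  have d1: "Suc x mod L \<noteq> (x + L - 1) mod L" "Suc y mod L \<noteq> (y + L - 1) mod L"
    using succ_ne_pred[OF L3] xL yL by auto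
  have d2: "Suc x mod L \<noteq> x" "(x + L - 1) mod L \<noteq> x" using succ_ne[OF L2 xL] pred_ne[OF L2 xL] by auto
  show ?thesis unfolding xy nbrs_eq[OF L2 xL yL] using d1 d2 by auto
qed

lemma nbrs_fin: "finite {w. adj L v w}"
proof -
  have "{w. adj L v w} \<subseteq> sites L" using adj_sites by blast
  moreover have "finite (sites L)" unfolding sites_def by simp
  ultimately show ?thesis by (rule finite_subset)
qed

lemma sites_fin: "finite (sites L)" unfolding sites_def by simp

lemma perimeter_formula:
  assumes ev: "even L" and L4: "4 \<le> L" and hc: "\<sigma> \<in> hardcore L"
  shows "perimeter L \<sigma> + 4 * card {v \<in> odd_sites L. \<sigma> v} = 4 * card {v \<in> even_sites L. \<not> \<sigma> v}"
proof -
  have L2: "2 \<le> L" and L3: "3 \<le> L" using L4 by auto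
  have hs: "\<And>v. \<sigma> v \<Longrightarrow> v \<in> sites L" and hadj: "\<And>v w. adj L v w \<Longrightarrow> \<not> (\<sigma> v \<and> \<sigma> w)"
    using hc unfolding hardcore_def by auto
  define K where "K = {v \<in> odd_sites L. \<sigma> v}"
  define E where "E = {v \<in> even_sites L. \<not> \<sigma> v}"
  define OR where "OR = odd_region L \<sigma>"
  have OKE: "OR = K \<union> E" unfolding OR_def K_def E_def odd_region_def by auto
  have Osites: "OR \<subseteq> sites L" unfolding OKE K_def E_def odd_sites_def even_sites_def by auto
  have finO: "finite OR" using Osites sites_fin finite_subset by blast
  have finK: "finite K" and finE: "finite E" using finO OKE by auto
  define BO where "BO = {(v, w). v \<in> OR \<and> w \<notin> OR \<and> adj L v w}"
  have eb_eq: "edge_boundary L C = {p \<in> BO. fst p \<in> C}" if C: "C \<in> components L OR" for C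
  proof
    show "edge_boundary L C \<subseteq> {p \<in> BO. fst p \<in> C}"
    proof
      fix p assume p: "p \<in> edge_boundary L C"
      obtain v w where vw: "p = (v, w)" by (cases p)
      have v: "v \<in> C" and w: "w \<in> ext_boundary L C" and a: "adj L v w"
        using p vw unfolding edge_boundary_def by auto
      have "w \<notin> C" using w unfolding ext_boundary_def by auto
      then have "w \<notin> OR" using comp_closed[OF C v _ a] by blast
      moreover have "v \<in> OR" using comp_sub[OF C] v by blast
      ultimately show "p \<in> {p \<in> BO. fst p \<in> C}" unfolding BO_def using vw v a by simp
    qed
    show "{p \<in> BO. fst p \<in> C} \<subseteq> edge_boundary L C"
    proof
      fix p assume p: "p \<in> {p \<in> BO. fst p \<in> C}"
      obtain v w where vw: "p = (v, w)" by (cases p)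
      have v: "v \<in> C" and w: "w \<notin> OR" and a: "adj L v w" using p vw unfolding BO_def by auto
      have "w \<notin> C" using w comp_sub[OF C] by blast
      then have "w \<in> ext_boundary L C" unfolding ext_boundary_def using adj_sites[OF a] v a by blast
      then show "p \<in> edge_boundary L C" unfolding edge_boundary_def using vw v a by simp
    qed
  qed
  have per_BO: "perimeter L \<sigma> = card BO"
  proof -
    have finI: "finite (components L OR)" using comp_finite[OF finO] .
    have finA: "\<forall>C\<in>components L OR. finite (edge_boundary L C)"
    proof
      fix C assume "C \<in> components L OR"
      have "edge_boundary L C \<subseteq> sites L \<times> sites L" unfolding edge_boundary_def using adj_sites by blast
      then show "finite (edge_boundary L C)" using sites_fin finite_subset by blast
    qed
    have disj: "\<forall>C1\<in>components L OR. \<forall>C2\<in>components L OR. C1 \<noteq> C2 \<longrightarrow> edge_boundary L C1 \<inter> edge_boundary L C2 = {}"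
    proof (intro ballI impI)
      fix C1 C2 assume c: "C1 \<in> components L OR" "C2 \<in> components L OR" "C1 \<noteq> C2"
      have "C1 \<inter> C2 = {}" using comp_disj[OF c] .
      then show "edge_boundary L C1 \<inter> edge_boundary L C2 = {}" unfolding eb_eq[OF c(1)] eb_eq[OF c(2)] by blast
    qed
    have U: "\<Union>(edge_boundary L ` components L OR) = BO"
    proof
      show "\<Union>(edge_boundary L ` components L OR) \<subseteq> BO" using eb_eq by blast
      show "BO \<subseteq> \<Union>(edge_boundary L ` components L OR)"
      proof
        fix p assume p: "p \<in> BO"
        then have "fst p \<in> OR" unfolding BO_def by auto
        then obtain C where C: "C \<in> components L OR" "fst p \<in> C" using comp_Union[of L OR] by blast
        then have "p \<in> edge_boundary L C" using eb_eq[OF C(1)] p by blast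
        then show "p \<in> \<Union>(edge_boundary L ` components L OR)" using C(1) by blast
      qed
    qed
    have "card BO = (\<Sum>C\<in>components L OR. card (edge_boundary L C))"
      using card_UN_disjoint[OF finI finA disj] U by simp
    then show ?thesis unfolding perimeter_def perim_def OR_def by simp
  qed
  have BO_eq: "BO = {(v, w). v \<in> E \<and> adj L v w \<and> \<not> \<sigma> w}"
  proof
    show "BO \<subseteq> {(v, w). v \<in> E \<and> adj L v w \<and> \<not> \<sigma> w}"
    proof
      fix p assume p: "p \<in> BO"
      obtain v w where vw: "p = (v, w)" by (cases p)
      have v: "v \<in> OR" and w: "w \<notin> OR" and a: "adj L v w" using p vw unfolding BO_def by auto
      have vE: "v \<in> E"
      proof (rule ccontr)
        assume "v \<notin> E"
        then have vK: "v \<in> K" using v OKE by simp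
        then have "w \<in> even_sites L" using adj_odd_even[OF ev L2 a] unfolding K_def by simp
        moreover have "\<not> \<sigma> w" using hadj[OF a] vK unfolding K_def by simp
        ultimately have "w \<in> E" unfolding E_def by simp
        then show False using w OKE by simp
      qed
      have "w \<in> odd_sites L" using adj_even_odd[OF ev L2 a] vE unfolding E_def by simp
      then have "\<not> \<sigma> w" using w OKE unfolding K_def by auto
      then show "p \<in> {(v, w). v \<in> E \<and> adj L v w \<and> \<not> \<sigma> w}" using vw vE a by simp
    qed
    show "{(v, w). v \<in> E \<and> adj L v w \<and> \<not> \<sigma> w} \<subseteq> BO"
    proof
      fix p assume p: "p \<in> {(v, w). v \<in> E \<and> adj L v w \<and> \<not> \<sigma> w}"
      obtain v w where vw: "p = (v, w)" by (cases p)
      have vE: "v \<in> E" and a: "adj L v w" and sw: "\<not> \<sigma> w" using p vw by auto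
      have wo: "w \<in> odd_sites L" using adj_even_odd[OF ev L2 a] vE unfolding E_def by simp
      then have "w \<notin> E" unfolding E_def odd_sites_def even_sites_def by auto
      moreover have "w \<notin> K" using sw unfolding K_def by simp
      ultimately have "w \<notin> OR" using OKE by simp
      then show "p \<in> BO" unfolding BO_def using vw vE OKE a by simp
    qed
  qed
  define PE where "PE = Sigma E (\<lambda>v. {w. adj L v w})"
  define Q where "Q = {(v, w). v \<in> E \<and> adj L v w \<and> \<sigma> w}"
  have PE_split: "PE = BO \<union> Q" "BO \<inter> Q = {}" unfolding PE_def BO_eq Q_def by auto
  have finPE: "finite PE" unfolding PE_def using finE nbrs_fin by simp
  have cPE: "card PE = 4 * card E"
  proof -
    have "card PE = (\<Sum>v\<in>E. card {w. adj L v w})" unfolding PE_def using finE nbrs_fin by simp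
    also have "\<dots> = (\<Sum>v\<in>E. 4)"
      by (rule sum.cong) (auto intro!: nbrs4[OF L3] simp: E_def even_sites_def)
    finally show ?thesis by simp
  qed
  have Q_eq: "Q = (\<lambda>(w, v). (v, w)) ` Sigma K (\<lambda>w. {v. adj L w v})"
  proof
    show "Q \<subseteq> (\<lambda>(w, v). (v, w)) ` Sigma K (\<lambda>w. {v. adj L w v})"
    proof
      fix p assume p: "p \<in> Q"
      obtain v w where vw: "p = (v, w)" by (cases p)
      have vE: "v \<in> E" and a: "adj L v w" and sw: "\<sigma> w" using p vw unfolding Q_def by auto
      have "w \<in> odd_sites L" using adj_even_odd[OF ev L2 a] vE unfolding E_def by simp
      then have wK: "w \<in> K" unfolding K_def using sw by simp
      have "adj L w v" using a adj_sym by metis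
      then have "(w, v) \<in> Sigma K (\<lambda>w. {v. adj L w v})" using wK by simp
      then show "p \<in> (\<lambda>(w, v). (v, w)) ` Sigma K (\<lambda>w. {v. adj L w v})" using vw by force
    qed
    show "(\<lambda>(w, v). (v, w)) ` Sigma K (\<lambda>w. {v. adj L w v}) \<subseteq> Q"
    proof
      fix p assume "p \<in> (\<lambda>(w, v). (v, w)) ` Sigma K (\<lambda>w. {v. adj L w v})"
      then obtain w v where wv: "w \<in> K" "adj L w v" "p = (v, w)" by auto
      have a: "adj L v w" using wv(2) adj_sym by metis
      have "v \<in> even_sites L" using adj_odd_even[OF ev L2 wv(2)] wv(1) unfolding K_def by simp
      moreover have "\<not> \<sigma> v" using hadj[OF a] wv(1) unfolding K_def by auto
      ultimately have "v \<in> E" unfolding E_def by simp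
      then show "p \<in> Q" unfolding Q_def using wv(1,3) a K_def by simp
    qed
  qed
  have cQ: "card Q = 4 * card K"
  proof -
    have inj: "inj_on (\<lambda>(w, v). (v, w)) (Sigma K (\<lambda>w. {v. adj L w v}))" by (rule inj_onI) auto
    have "card Q = card (Sigma K (\<lambda>w. {v. adj L w v}))" unfolding Q_eq by (rule card_image[OF inj])
    also have "\<dots> = (\<Sum>w\<in>K. card {v. adj L w v})" using finK nbrs_fin by simp
    also have "\<dots> = (\<Sum>w\<in>K. 4)"
      by (rule sum.cong) (auto intro!: nbrs4[OF L3] simp: K_def odd_sites_def)
    finally show ?thesis by simp
  qed
  have "card PE = card BO + card Q"
    using PE_split finPE card_Un_disjoint[of BO Q] finite_Un by metis
  then show ?thesis using cPE cQ per_BO unfolding K_def E_def by simp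
qed

definition P :: "nat \<Rightarrow> int \<Rightarrow> int \<Rightarrow> site" where
  "P L X Y = (nat (X mod int L), nat (Y mod int L))"

lemma P_sites: "0 < L \<Longrightarrow> P L X Y \<in> sites L"
  unfolding P_def sites_def by (simp add: nat_less_iff)

lemma adjP:
  assumes L2: "2 \<le> L"
  shows "adj L (P L X Y) (P L (X + 1) Y)" "adj L (P L X Y) (P L (X - 1) Y)"
        "adj L (P L X Y) (P L X (Y + 1))" "adj L (P L X Y) (P L X (Y - 1))"
proof -
  have L0: "0 < L" using L2 by simp
  have xL: "nat (X mod int L) < L" and yL: "nat (Y mod int L) < L" using L0 by (simp_all add: nat_less_iff)
  note ch = adj_char[OF L2, of "nat (X mod int L)" "nat (Y mod int L)"]
  show "adj L (P L X Y) (P L (X + 1) Y)" unfolding P_def using ch xL yL nat_succ_int[OF L0, of X] by simp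
  show "adj L (P L X Y) (P L (X - 1) Y)" unfolding P_def using ch xL yL nat_pred_int[OF L0, of X] by simp
  show "adj L (P L X Y) (P L X (Y + 1))" unfolding P_def using ch xL yL nat_succ_int[OF L0, of Y] by simp
  show "adj L (P L X Y) (P L X (Y - 1))" unfolding P_def using ch xL yL nat_pred_int[OF L0, of Y] by simp
qed

lemma adjP_cases:
  assumes L2: "2 \<le> L" and a: "adj L (P L X Y) w"
  shows "w = P L (X + 1) Y \<or> w = P L (X - 1) Y \<or> w = P L X (Y + 1) \<or> w = P L X (Y - 1)"
proof -
  have L0: "0 < L" using L2 by simp
  have "w = (Suc (nat (X mod int L)) mod L, nat (Y mod int L)) \<or> w = ((nat (X mod int L) + L - 1) mod L, nat (Y mod int L)) \<or>
      w = (nat (X mod int L), Suc (nat (Y mod int L)) mod L) \<or> w = (nat (X mod int L), (nat (Y mod int L) + L - 1) mod L)"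
    using adj_char[OF L2, of "nat (X mod int L)" "nat (Y mod int L)"] a unfolding P_def by simp
  then show ?thesis unfolding P_def using nat_succ_int[OF L0] nat_pred_int[OF L0] by simp
qed

lemma rhombus_core_P: "rhombus_core L l1 l2 \<eta> = {P L (int (fst \<eta>) + int k + int j) (int (snd \<eta>) + int k - int j) | k j. k < l1 \<and> j < l2}"
  unfolding rhombus_core_def P_def ..

lemma P_eq_mod:
  assumes "0 < L" "P L X Y = P L X' Y'"
  shows "X mod int L = X' mod int L" "Y mod int L = Y' mod int L"
  using assms unfolding P_def by (simp_all add: nat_eq_iff2)

lemma card_rhombus_eq:
  assumes Ll: "2 * l < L"
  shows "card (rhombus_core L l l \<eta>) = l^2"
proof -
  have L0: "0 < L" using Ll by simp
  define f where "f = (\<lambda>(k::nat, j::nat). P L (int (fst \<eta>) + int k + int j) (int (snd \<eta>) + int k - int j))"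
  have img: "rhombus_core L l l \<eta> = f ` ({..<l} \<times> {..<l})" unfolding rhombus_core_image f_def P_def ..
  have inj: "inj_on f ({..<l} \<times> {..<l})"
  proof (rule inj_onI)
    fix p q assume p: "p \<in> {..<l} \<times> {..<l}" and q: "q \<in> {..<l} \<times> {..<l}" and e: "f p = f q"
    obtain k j where kj: "p = (k, j)" by (cases p)
    obtain k' j' where kj': "q = (k', j')" by (cases q)
    have b: "k < l" "j < l" "k' < l" "j' < l" using p q kj kj' by auto
    have m1: "(int (fst \<eta>) + int k + int j) mod int L = (int (fst \<eta>) + int k' + int j') mod int L"
      and m2: "(int (snd \<eta>) + int k - int j) mod int L = (int (snd \<eta>) + int k' - int j') mod int L"
    proof -
      have "P L (int (fst \<eta>) + int k + int j) (int (snd \<eta>) + int k - int j) =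
            P L (int (fst \<eta>) + int k' + int j') (int (snd \<eta>) + int k' - int j')"
        using e unfolding kj kj' f_def by simp
      then show "(int (fst \<eta>) + int k + int j) mod int L = (int (fst \<eta>) + int k' + int j') mod int L"
        "(int (snd \<eta>) + int k - int j) mod int L = (int (snd \<eta>) + int k' - int j') mod int L"
        using P_eq_mod[OF L0] by blast+
    qed
    have d1: "int L dvd (int k + int j) - (int k' + int j')"
    proof -
      have "int L dvd (int (fst \<eta>) + int k + int j) - (int (fst \<eta>) + int k' + int j')" using m1 mod_eq_dvd_iff by blast
      then show ?thesis by (simp add: algebra_simps)
    qed
    have d2: "int L dvd (int k - int j) - (int k' - int j')"
    proof -
      have "int L dvd (int (snd \<eta>) + int k - int j) - (int (snd \<eta>) + int k' - int j')" using m2 mod_eq_dvd_iff by blast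
      then show ?thesis by (simp add: algebra_simps)
    qed
    have "int L dvd ((int k + int j) - (int k' + int j')) + ((int k - int j) - (int k' - int j'))"
      using d1 d2 by (rule dvd_add)
    then have "int L dvd 2 * (int k - int k')" by (simp add: algebra_simps)
    moreover have "\<bar>2 * (int k - int k')\<bar> < int L" using b Ll by auto
    ultimately have "2 * (int k - int k') = 0" by (rule small_dvd_zero)
    then have kk: "k = k'" by simp
    then have "int L dvd (int j - int j')" using d1 by (simp add: algebra_simps)
    moreover have "\<bar>int j - int j'\<bar> < int L" using b Ll by auto
    ultimately have "int j - int j' = 0" by (rule small_dvd_zero)
    then show "p = q" using kk kj kj' by simp
  qed
  have "card (rhombus_core L l l \<eta>) = card ({..<l} \<times> {..<l})" unfolding img by (rule card_image[OF inj])
  then show ?thesis by (simp add: power2_eq_square)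
qed

lemma P_odd:
  assumes ev: "even L" and L0: "0 < L" and o: "odd (X + Y)"
  shows "P L X Y \<in> odd_sites L"
proof -
  have evL: "even (int L)" using ev by simp
  have "odd (X mod int L + Y mod int L)"
    using o even_mod_int[OF evL, of X] even_mod_int[OF evL, of Y] by simp
  moreover have "int (nat (X mod int L) + nat (Y mod int L)) = X mod int L + Y mod int L" using L0 by simp
  ultimately have "odd (int (nat (X mod int L) + nat (Y mod int L)))" by metis
  then have "odd (nat (X mod int L) + nat (Y mod int L))" using even_of_nat[of "nat (X mod int L) + nat (Y mod int L)"] by metis
  then show ?thesis using P_sites[OF L0] unfolding P_def odd_sites_def by simp
qed

lemma P_even:
  assumes ev: "even L" and L0: "0 < L" and o: "even (X + Y)"
  shows "P L X Y \<in> even_sites L"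
proof -
  have evL: "even (int L)" using ev by simp
  have "even (X mod int L + Y mod int L)"
    using o even_mod_int[OF evL, of X] even_mod_int[OF evL, of Y] by simp
  moreover have "int (nat (X mod int L) + nat (Y mod int L)) = X mod int L + Y mod int L" using L0 by simp
  ultimately have "even (int (nat (X mod int L) + nat (Y mod int L)))" by metis
  then have "even (nat (X mod int L) + nat (Y mod int L))" using even_of_nat[of "nat (X mod int L) + nat (Y mod int L)"] by metis
  then show ?thesis using P_sites[OF L0] unfolding P_def even_sites_def by simp
qed

lemma rhombus_odd:
  assumes ev: "even L" and L0: "0 < L" and \<eta>: "\<eta> \<in> odd_sites L"
  shows "rhombus_core L l1 l2 \<eta> \<subseteq> odd_sites L"
proof
  fix v assume "v \<in> rhombus_core L l1 l2 \<eta>"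
  then obtain k j where v: "v = P L (int (fst \<eta>) + int k + int j) (int (snd \<eta>) + int k - int j)"
    unfolding rhombus_core_P by auto
  have "odd (fst \<eta> + snd \<eta>)" using \<eta> unfolding odd_sites_def by simp
  then have "odd (int (fst \<eta>) + int (snd \<eta>))" by (metis even_of_nat of_nat_add)
  then have "odd ((int (fst \<eta>) + int k + int j) + (int (snd \<eta>) + int k - int j))" by simp
  then show "v \<in> odd_sites L" unfolding v by (rule P_odd[OF ev L0])
qed


lemma ns_le:
  assumes L2: "2 \<le> L"
  shows "card (ext_boundary L (rhombus_core L l l \<eta>)) \<le> (l+1)^2"
proof -
  define g where "g = (\<lambda>(k::nat, j::nat). P L (int (fst \<eta>) + int k + int j - 1) (int (snd \<eta>) + int k - int j))"
  have sub: "ext_boundary L (rhombus_core L l l \<eta>) \<subseteq> g ` ({..<l+1} \<times> {..<l+1})"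
  proof
    fix w assume "w \<in> ext_boundary L (rhombus_core L l l \<eta>)"
    then obtain s where s: "s \<in> rhombus_core L l l \<eta>" "adj L s w" unfolding ext_boundary_def by auto
    then obtain k j where kj: "k < l" "j < l" "s = P L (int (fst \<eta>) + int k + int j) (int (snd \<eta>) + int k - int j)"
      unfolding rhombus_core_P by auto
    define X where "X = int (fst \<eta>) + int k + int j"
    define Y where "Y = int (snd \<eta>) + int k - int j"
    have "w = P L (X + 1) Y \<or> w = P L (X - 1) Y \<or> w = P L X (Y + 1) \<or> w = P L X (Y - 1)"
      using adjP_cases[OF L2] s(2) kj(3) X_def Y_def by simp
    then show "w \<in> g ` ({..<l+1} \<times> {..<l+1})"
    proof (elim disjE)
      assume w: "w = P L (X + 1) Y"
      have "g (k+1, j+1) = w" unfolding w g_def X_def Y_def by (simp add: algebra_simps)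
      then show ?thesis using kj by force
    next
      assume w: "w = P L (X - 1) Y"
      have "g (k, j) = w" unfolding w g_def X_def Y_def by (simp add: algebra_simps)
      then show ?thesis using kj by force
    next
      assume w: "w = P L X (Y + 1)"
      have "g (k+1, j) = w" unfolding w g_def X_def Y_def by (simp add: algebra_simps)
      then show ?thesis using kj by force
    next
      assume w: "w = P L X (Y - 1)"
      have "g (k, j+1) = w" unfolding w g_def X_def Y_def by (simp add: algebra_simps)
      then show ?thesis using kj by force
    qed
  qed
  have "card (ext_boundary L (rhombus_core L l l \<eta>)) \<le> card (g ` ({..<l+1} \<times> {..<l+1}))"
    by (rule card_mono[OF _ sub]) simp
  also have "\<dots> \<le> card ({..<l+1} \<times> {..<l+1})" by (rule card_image_le) simp
  finally show ?thesis by (simp add: power2_eq_square)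
qed

lemma rhombus_conn:
  assumes ev: "even L" and L2: "2 \<le> L" and \<eta>: "\<eta> \<in> odd_sites L" and l1: "1 \<le> l"
  shows "components L (rhombus L l l \<eta>) = {rhombus L l l \<eta>}"
proof -
  have L0: "0 < L" using L2 by simp
  define S where "S = rhombus_core L l l \<eta>"
  define R where "R = rhombus L l l \<eta>"
  have RS: "R = S \<union> ext_boundary L S" unfolding R_def S_def rhombus_def by simp
  have Sodd: "S \<subseteq> odd_sites L" unfolding S_def by (rule rhombus_odd[OF ev L0 \<eta>])
  define f where "f k j = P L (int (fst \<eta>) + int k + int j) (int (snd \<eta>) + int k - int j)" for k j :: nat
  have fS: "f k j \<in> S" if "k < l" "j < l" for k j unfolding S_def rhombus_core_P f_def using that by blast
  have edge: "(a, b) \<in> (adj_within L R)\<^sup>*" if "a \<in> R" "b \<in> R" "adj L a b" for a b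
    using that unfolding adj_within_def by auto
  have mid: "m \<in> R" if "s \<in> S" "adj L s m" for s m
    using ext_boundary_mem[OF ev L2 Sodd that] RS by simp
  have stepk: "(f k j, f (Suc k) j) \<in> (adj_within L R)\<^sup>*" if "Suc k < l" "j < l" for k j
  proof -
    define X where "X = int (fst \<eta>) + int k + int j"
    define Y where "Y = int (snd \<eta>) + int k - int j"
    have e1: "f k j = P L X Y" unfolding f_def X_def Y_def ..
    have e2: "f (Suc k) j = P L (X + 1) (Y + 1)" unfolding f_def X_def Y_def by (simp add: algebra_simps)
    have a1: "adj L (f k j) (P L X (Y + 1))" unfolding e1 by (rule adjP(3)[OF L2])
    have a2: "adj L (P L X (Y + 1)) (f (Suc k) j)" unfolding e2 by (rule adjP(1)[OF L2])
    have in1: "f k j \<in> R" "f (Suc k) j \<in> R" using fS that RS by auto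
    have in2: "P L X (Y + 1) \<in> R" using mid[OF fS a1] that by simp
    show ?thesis using edge[OF in1(1) in2 a1] edge[OF in2 in1(2) a2] by (rule rtrancl_trans)
  qed
  have stepj: "(f k j, f k (Suc j)) \<in> (adj_within L R)\<^sup>*" if "k < l" "Suc j < l" for k j
  proof -
    define X where "X = int (fst \<eta>) + int k + int j"
    define Y where "Y = int (snd \<eta>) + int k - int j"
    have e1: "f k j = P L X Y" unfolding f_def X_def Y_def ..
    have e2: "f k (Suc j) = P L (X + 1) (Y - 1)" unfolding f_def X_def Y_def by (simp add: algebra_simps)
    have a1: "adj L (f k j) (P L X (Y - 1))" unfolding e1 by (rule adjP(4)[OF L2])
    have a2: "adj L (P L X (Y - 1)) (f k (Suc j))" unfolding e2 by (rule adjP(1)[OF L2])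
    have in1: "f k j \<in> R" "f k (Suc j) \<in> R" using fS that RS by auto
    have in2: "P L X (Y - 1) \<in> R" using mid[OF fS a1] that by simp
    show ?thesis using edge[OF in1(1) in2 a1] edge[OF in2 in1(2) a2] by (rule rtrancl_trans)
  qed
  have pj: "(f 0 0, f 0 j) \<in> (adj_within L R)\<^sup>*" if "j < l" for j
    using that
  proof (induction j)
    case 0 then show ?case by simp
  next
    case (Suc j)
    then show ?case using stepj[of 0 j] l1 rtrancl_trans by fastforce
  qed
  have pk: "(f 0 j, f k j) \<in> (adj_within L R)\<^sup>*" if "k < l" "j < l" for k j
    using that
  proof (induction k)
    case 0 then show ?case by simp
  next
    case (Suc k)
    then show ?case using stepk[of k j] rtrancl_trans by fastforce
  qed
  have allS: "(f 0 0, s) \<in> (adj_within L R)\<^sup>*" if "s \<in> S" for s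
  proof -
    have "s \<in> {P L (int (fst \<eta>) + int k + int j) (int (snd \<eta>) + int k - int j) | k j. k < l \<and> j < l}"
      using that unfolding S_def rhombus_core_P .
    then obtain k j where kj: "k < l" "j < l" "s = f k j" unfolding f_def by auto
    show ?thesis using pj[OF kj(2)] pk[OF kj(1,2)] kj(3) rtrancl_trans by fastforce
  qed
  have allR: "(f 0 0, w) \<in> (adj_within L R)\<^sup>*" if "w \<in> R" for w
  proof (cases "w \<in> S")
    case True then show ?thesis using allS by blast
  next
    case False
    then have "w \<in> ext_boundary L S" using that RS by simp
    then obtain s where s: "s \<in> S" "adj L s w" unfolding ext_boundary_def by auto
    have "s \<in> R" using s RS by simp
    then have "(s, w) \<in> (adj_within L R)\<^sup>*" using edge s(2) that by blast
    then show ?thesis using allS[OF s(1)] rtrancl_trans by fastforce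
  qed
  have "f 0 0 \<in> R" using fS[of 0 0] l1 RS by simp
  then show ?thesis using comp_connected[of "f 0 0" R L] allR unfolding R_def by blast
qed

lemma pm_mono: "X \<subseteq> Y \<Longrightarrow> pm L X \<subseteq> pm L Y"
  unfolding pm_def by auto

lemma iso:
  fixes L l :: nat and K :: "site set"
  assumes ev: "even L" and L4: "4 \<le> L" and l1: "1 \<le> l" and Ll: "2*l+2 \<le> L"
    and K: "K \<subseteq> odd_sites L" and big: "l^2 \<le> card K"
    and small: "card K + card (ext_boundary L K) \<le> 2*l^2 + 2*l + 1"
  shows "card K = l^2 \<and> card (ext_boundary L K) = (l+1)^2 \<and> (\<exists>\<eta>\<in>odd_sites L. K = rhombus_core L l l \<eta>)"
proof -
  define NB where "NB = ext_boundary L K"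
  define kk where "kk y = card (Ks L K y)" for y
  define nn where "nn y = card (Ks L NB y)" for y
  define h where "h = L div 2"
  have L0: "0 < L" using L4 by simp
  have L2h: "L = 2*h" using ev h_def by simp
  have NBs: "NB \<subseteq> sites L" unfolding NB_def ext_boundary_def by auto
  have Kss: "K \<subseteq> sites L" using Ksites[OF ev L4 K] .
  have cK: "card K = (\<Sum>y<L. kk y)" using card_rows[OF Kss] unfolding kk_def .
  have cN: "card NB = (\<Sum>y<L. nn y)" using card_rows[OF NBs] unfolding nn_def .
  have finN: "finite (Ks L NB y)" for y using Ks_fin[OF NBs] .
  have finK: "finite (Ks L K y)" for y using Ks_fin[OF Kss] .
  have rup: "Ks L K (Suc y) \<subseteq> Ks L NB y" for y using row_up[OF ev L4 K] unfolding NB_def .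
  have rdown: "Ks L K y \<subseteq> Ks L NB (Suc y)" for y using row_down[OF ev L4 K] unfolding NB_def .
  have rpm: "pm L (Ks L K y) \<subseteq> Ks L NB y" for y using row_pm[OF ev L4 K] unfolding NB_def .
  have H2: "kk y \<le> nn y" for y
  proof -
    have "card (Ks L K y) = card ((\<lambda>x. Suc x mod L) ` Ks L K y)"
      using card_image[OF inj_on_subset[OF inj_succ Ks_sub[OF Kss]]] by simp
    also have "\<dots> \<le> card (pm L (Ks L K y))"
      by (rule card_mono) (auto simp: pm_def finK)
    also have "\<dots> \<le> nn y" unfolding nn_def by (rule card_mono[OF finN rpm])
    finally show ?thesis unfolding kk_def .
  qed
  have H3: "kk y + 1 \<le> nn y" if "0 < kk y" "kk y < h" for y
  proof -
    have "kk y + 1 \<le> card (pm L (Ks L K y))"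
      using card_pm[OF ev L4 K] that unfolding kk_def h_def by simp
    also have "\<dots> \<le> nn y" unfolding nn_def by (rule card_mono[OF finN rpm])
    finally show ?thesis .
  qed
  have O: "(\<Sum>y<L. kk y) = l^2 \<and> (\<Sum>y<L. nn y) = (l+1)^2 \<and>
     (\<exists>y0. (\<forall>i. 1 \<le> i \<and> i \<le> 2*l-1 \<longrightarrow> kk (y0+i) = min i (2*l-i) \<and> nn (y0+i) = kk (y0+i) + 1)
        \<and> (\<forall>y. 0 < kk y \<longrightarrow> (\<exists>i. 1 \<le> i \<and> i \<le> 2*l-1 \<and> y mod L = (y0+i) mod L)))"
  proof (rule oneD[OF L2h Ll l1])
    show "kk (y + L) = kk y" for y unfolding kk_def Ks_per ..
    show "nn (y + L) = nn y" for y unfolding nn_def Ks_per ..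
    show "kk (Suc y) \<le> nn y" for y unfolding kk_def nn_def by (rule card_mono[OF finN rup])
    show "kk y \<le> nn (Suc y)" for y unfolding kk_def nn_def by (rule card_mono[OF finN rdown])
    show "kk y \<le> nn y" for y by (rule H2)
    show "0 < kk y \<Longrightarrow> kk y < h \<Longrightarrow> kk y + 1 \<le> nn y" for y by (rule H3)
    show "kk y \<le> h" for y unfolding kk_def h_def by (rule row_le[OF ev L4 K])
    show "l^2 \<le> (\<Sum>y<L. kk y)" using big cK by simp
    show "(\<Sum>y<L. kk y) + (\<Sum>y<L. nn y) \<le> 2*l^2 + 2*l + 1" using small cK cN NB_def by simp
  qed
  then obtain y0 where
    prof: "\<And>i. 1 \<le> i \<Longrightarrow> i \<le> 2*l-1 \<Longrightarrow> kk (y0+i) = min i (2*l-i) \<and> nn (y0+i) = kk (y0+i) + 1"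
    and rows: "\<And>y. 0 < kk y \<Longrightarrow> \<exists>i. 1 \<le> i \<and> i \<le> 2*l-1 \<and> y mod L = (y0+i) mod L"
    by blast
  have sums: "card K = l^2" "card NB = (l+1)^2" using O cK cN by auto
  have "kk (y0 + 1) = 1" using prof[of 1] l1 by simp
  then obtain x0 where x0: "Ks L K (y0 + 1) = {x0}" unfolding kk_def by (rule card_1_singletonE)
  have x0L: "x0 < L" using x0 Ks_sub[OF Kss, of "y0+1"] by auto
  have x0K: "(x0, (y0 + 1) mod L) \<in> K" using x0 unfolding Ks_def by auto
  define c where "c = int x0"
  have upper: "Ks L K (y0+i) \<subseteq> ap L c i" if "1 \<le> i" "i \<le> l" for i
    using that
  proof (induction i)
    case 0 then show ?case by simp
  next
    case (Suc i)
    show ?case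
    proof (cases "i = 0")
      case True
      have "ap L c 1 = {x0}" unfolding ap_def c_def using x0L by auto
      then show ?thesis using x0 True by simp
    next
      case False
      then have i1: "1 \<le> i" "i \<le> l" using Suc.prems by auto
      have IH: "Ks L K (y0+i) \<subseteq> ap L c i" using Suc.IH i1 by simp
      have ki: "kk (y0+i) = i" "nn (y0+i) = i + 1" using prof[of i] i1 Suc.prems by auto
      have eqN: "pm L (Ks L K (y0+i)) = Ks L NB (y0+i)"
      proof (rule card_subset_eq[OF finN rpm])
        have "i < h" using Suc.prems Ll L2h by simp
        then have "kk (y0+i) + 1 \<le> card (pm L (Ks L K (y0+i)))"
          using card_pm[OF ev L4 K, of "y0+i"] ki i1 unfolding kk_def h_def by simp
        moreover have "card (pm L (Ks L K (y0+i))) \<le> nn (y0+i)" unfolding nn_def by (rule card_mono[OF finN rpm])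
        ultimately show "card (pm L (Ks L K (y0+i))) = card (Ks L NB (y0+i))" using ki nn_def by simp
      qed
      have "Ks L K (y0 + Suc i) \<subseteq> Ks L NB (y0+i)" using rup[of "y0+i"] by simp
      also have "\<dots> = pm L (Ks L K (y0+i))" using eqN by simp
      also have "\<dots> \<subseteq> pm L (ap L c i)" using IH by (rule pm_mono)
      also have "\<dots> \<subseteq> ap L c (Suc i)" by (rule ap_dilate[OF L0])
      finally show ?thesis .
    qed
  qed
  have lower: "Ks L K (y0+l+d) \<subseteq> ap L c (l-d)" if "l + d \<le> 2*l - 1" for d
    using that
  proof (induction d)
    case 0 then show ?case using upper[of l] l1 by simp
  next
    case (Suc d)
    define i where "i = l + d"
    have IH: "Ks L K (y0+i) \<subseteq> ap L c (l-d)" using Suc i_def by (simp add: add.assoc)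
    have ki: "kk (y0+i) = 2*l - i" using prof[of i] Suc.prems l1 unfolding i_def by auto
    have ki1: "kk (y0+Suc i) = 2*l - i - 1" "nn (y0 + Suc i) = 2*l - i" using prof[of "Suc i"] Suc.prems l1 unfolding i_def by auto
    have eqN: "Ks L K (y0+i) = Ks L NB (y0 + Suc i)"
    proof (rule card_subset_eq[OF finN])
      show "Ks L K (y0+i) \<subseteq> Ks L NB (y0 + Suc i)" using rdown[of "y0+i"] by simp
      show "card (Ks L K (y0+i)) = card (Ks L NB (y0 + Suc i))" using ki ki1 kk_def nn_def by simp
    qed
    have pmsub: "pm L (Ks L K (y0 + Suc i)) \<subseteq> ap L c (l-d)"
      using rpm[of "y0 + Suc i"] eqN IH by auto
    show ?case
    proof
      fix b assume b: "b \<in> Ks L K (y0 + l + Suc d)"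
      then have b': "b \<in> Ks L K (y0 + Suc i)" unfolding i_def by (simp add: add.assoc)
      have bL: "b < L" using b' Ks_sub[OF Kss] by auto
      have "Suc b mod L \<in> ap L c (l-d)" "(b + L - 1) mod L \<in> ap L c (l-d)"
        using pmsub b' unfolding pm_def by auto
      moreover have "2 * (l - d) + 2 \<le> L" using Ll by simp
      ultimately have "b \<in> ap L c (l - d - 1)" using ap_erode[OF L0 bL, of c "l - d"] by blast
      then show "b \<in> ap L c (l - Suc d)" by simp
    qed
  qed
  define \<eta> where "\<eta> = (nat ((c - int l + 1) mod int L), (y0 + l) mod L)"
  have sub: "K \<subseteq> rhombus_core L l l \<eta>"
  proof
    fix v assume v: "v \<in> K"
    obtain x y where xy: "v = (x, y)" by (cases v)
    have yL: "y < L" using v xy Kss unfolding sites_def by auto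
    have xK: "x \<in> Ks L K y" using v xy yL unfolding Ks_def by simp
    then have "0 < kk y" unfolding kk_def using finK card_gt_0_iff by blast
    then obtain i where i: "1 \<le> i" "i \<le> 2*l-1" "y mod L = (y0+i) mod L" using rows by blast
    have "Ks L K y = Ks L K (y0 + i)" using Ks_mod[of L K y] Ks_mod[of L K "y0+i"] i(3) by simp
    then have xK': "x \<in> Ks L K (y0+i)" using xK by simp
    define t where "t = (if i \<le> l then i else 2*l - i)"
    have "x \<in> ap L c t"
    proof (cases "i \<le> l")
      case True then show ?thesis using upper[of i] i xK' t_def by auto
    next
      case False
      then have "Ks L K (y0 + l + (i - l)) \<subseteq> ap L c (l - (i - l))" using lower[of "i - l"] i by simp
      moreover have "y0 + l + (i - l) = y0 + i" "l - (i - l) = t" using False t_def by auto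
      ultimately show ?thesis using xK' by auto
    qed
    then obtain m where m: "m < t" "x = nat ((c - int t + 1 + 2 * int m) mod int L)" unfolding ap_def by auto
    have "y = (y0 + i) mod L" using i(3) yL by simp
    then have "v = (nat ((c - int t + 1 + 2 * int m) mod int L), (y0 + i) mod L)" using xy m by simp
    then show "v \<in> rhombus_core L l l \<eta>" unfolding \<eta>_def using in_rhombus[OF L0 i(1) i(2) t_def m(1)] by simp
  qed
  have Keq: "K = rhombus_core L l l \<eta>"
  proof (rule card_subset_eq[OF finite_rhombus sub])
    show "card K = card (rhombus_core L l l \<eta>)"
      using card_mono[OF finite_rhombus sub] card_rhombus_le[of L l \<eta>] sums by simp
  qed
  have \<eta>odd: "\<eta> \<in> odd_sites L"
  proof -
    have s: "\<eta> \<in> sites L" unfolding \<eta>_def sites_def using L0 by (simp add: nat_less_iff)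
    have evL: "even (int L)" using ev by simp
    have p1: "odd (x0 + (y0 + 1) mod L)" using x0K K unfolding odd_sites_def by auto
    have p1': "odd (int x0 + (int y0 + 1))"
    proof -
      have "odd (int (x0 + (y0 + 1) mod L))" using p1 by simp
      moreover have "int (x0 + (y0 + 1) mod L) = int x0 + (int y0 + 1) mod int L" by (simp add: of_nat_mod add.commute)
      ultimately have A: "odd (int x0 + (int y0 + 1) mod int L)" by metis
      have B: "even ((int y0 + 1) mod int L) \<longleftrightarrow> even (int y0 + 1)" by (rule even_mod_int[OF evL])
      show ?thesis using A B even_add by metis
    qed
    have "int (fst \<eta>) + int (snd \<eta>) = (c - int l + 1) mod int L + (int y0 + int l) mod int L"
      unfolding \<eta>_def using L0 by (simp add: of_nat_mod)
    moreover have "odd ((c - int l + 1) mod int L + (int y0 + int l) mod int L)"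
    proof -
      have "even ((c - int l + 1) mod int L) = even (c - int l + 1)" by (rule even_mod_int[OF evL])
      moreover have "even ((int y0 + int l) mod int L) = even (int y0 + int l)" by (rule even_mod_int[OF evL])
      moreover have "odd ((c - int l + 1) + (int y0 + int l))"
      proof -
        have "(c - int l + 1) + (int y0 + int l) = int x0 + (int y0 + 1)" unfolding c_def by simp
        then show ?thesis using p1' by simp
      qed
      ultimately show ?thesis by simp
    qed
    ultimately have "odd (int (fst \<eta> + snd \<eta>))" by simp
    then have "odd (fst \<eta> + snd \<eta>)" by simp
    then show ?thesis using s unfolding odd_sites_def by simp
  qed
  show ?thesis using sums Keq \<eta>odd NB_def by auto
qed

lemma card_even_ge:
  assumes ev: "even L"
  shows "(L div 2)^2 \<le> card (even_sites L)"
proof -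
  define h where "h = L div 2"
  define f where "f = (\<lambda>(a::nat, b::nat). (2 * a, 2 * b))"
  have sub: "f ` ({..<h} \<times> {..<h}) \<subseteq> even_sites L"
    unfolding f_def h_def even_sites_def sites_def using ev by auto
  have inj: "inj_on f ({..<h} \<times> {..<h})" unfolding f_def by (rule inj_onI) auto
  have fin: "finite (even_sites L)" unfolding even_sites_def sites_def by simp
  have "card (f ` ({..<h} \<times> {..<h})) = h^2" using card_image[OF inj] by (simp add: power2_eq_square)
  then show ?thesis using card_mono[OF fin sub] h_def by simp
qed

lemma ext_boundary_even:
  assumes ev: "even L" and L2: "2 \<le> L" and K: "K \<subseteq> odd_sites L"
  shows "ext_boundary L K \<subseteq> even_sites L"
proof
  fix w assume "w \<in> ext_boundary L K"
  then obtain v where v: "v \<in> K" "adj L v w" unfolding ext_boundary_def by auto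
  then show "w \<in> even_sites L" using adj_odd_even[OF ev L2 v(2)] K by auto
qed

lemma hc_nb:
  assumes ev: "even L" and L2: "2 \<le> L" and hc: "\<sigma> \<in> hardcore L"
  shows "ext_boundary L {v \<in> odd_sites L. \<sigma> v} \<subseteq> {v \<in> even_sites L. \<not> \<sigma> v}"
proof
  fix w assume w: "w \<in> ext_boundary L {v \<in> odd_sites L. \<sigma> v}"
  then obtain v where v: "v \<in> odd_sites L" "\<sigma> v" "adj L v w" unfolding ext_boundary_def by auto
  have "w \<in> even_sites L" using adj_odd_even[OF ev L2 v(3)] v(1) by simp
  moreover have "\<not> \<sigma> w" using hc v(2,3) unfolding hardcore_def by blast
  ultimately show "w \<in> {v \<in> even_sites L. \<not> \<sigma> v}" by simp
qed

lemma fin_E: "finite {v \<in> even_sites L. \<not> \<sigma> v}"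
  unfolding even_sites_def sites_def by simp

lemma kbound:
  assumes ev: "even L" and L4: "4 \<le> L" and l1: "1 \<le> l" and Ll: "2*l+2 \<le> L"
    and hc: "\<tau> \<in> hardcore L" and ar: "real_area L \<tau> = 2 * l^2 + 2 * l + 1"
  shows "card {v \<in> odd_sites L. \<tau> v} \<le> l^2"
proof (rule ccontr)
  assume "\<not> card {v \<in> odd_sites L. \<tau> v} \<le> l^2"
  then have big: "l^2 \<le> card {v \<in> odd_sites L. \<tau> v}" "card {v \<in> odd_sites L. \<tau> v} \<noteq> l^2" by auto
  have L2: "2 \<le> L" using L4 by simp
  have "card (ext_boundary L {v \<in> odd_sites L. \<tau> v}) \<le> card {v \<in> even_sites L. \<not> \<tau> v}"
    by (rule card_mono[OF fin_E hc_nb[OF ev L2 hc]])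
  then have "card {v \<in> odd_sites L. \<tau> v} + card (ext_boundary L {v \<in> odd_sites L. \<tau> v}) \<le> 2 * l^2 + 2 * l + 1"
    using ar unfolding real_area_def by simp
  then have "card {v \<in> odd_sites L. \<tau> v} = l^2" using iso[OF ev L4 l1 Ll _ big(1)] by auto
  then show False using big(2) by simp
qed

theorem lemma3p8:
  fixes L l :: nat and \<sigma> :: "site \<Rightarrow> bool"
  assumes "L \<ge> 6" and "even L" and "1 \<le> l" and "2 * l < L"
    and "\<sigma> \<in> hardcore L" and "real_area L \<sigma> = 2 * l^2 + 2 * l + 1"
  shows "(\<forall>\<tau>\<in>hardcore L. real_area L \<tau> = 2 * l^2 + 2 * l + 1 \<longrightarrow>
            perimeter L \<sigma> \<le> perimeter L \<tau>)
         \<longleftrightarrow> (\<exists>\<eta>\<in>odd_sites L. components L (odd_region L \<sigma>) = {rhombus L l l \<eta>})"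
proof -
  have ev: "even L" and l1: "1 \<le> l" and hc: "\<sigma> \<in> hardcore L" using assms by auto
  have L4: "4 \<le> L" and L2: "2 \<le> L" and L0: "0 < L" using assms by auto
  have Ll: "2*l+2 \<le> L"
  proof -
    obtain h where h: "L = 2*h" using ev by (auto elim: evenE)
    then show ?thesis using assms(4) by simp
  qed
  define A where "A = 2 * l^2 + 2 * l + 1"
  have arA: "real_area L \<sigma> = A" using assms(6) A_def by simp
  define K where "K = {v \<in> odd_sites L. \<sigma> v}"
  define E where "E = {v \<in> even_sites L. \<not> \<sigma> v}"
  have kE: "card K + card E = A" using arA unfolding real_area_def K_def E_def .
  have pf: "perimeter L \<sigma> + 4 * card K = 4 * card E" unfolding K_def E_def by (rule perimeter_formula[OF ev L4 hc])
  have sq: "(l+1)^2 = l^2 + 2*l + 1" by (simp add: power2_eq_square algebra_simps)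
  have ORKE: "odd_region L \<sigma> = K \<union> E" unfolding odd_region_def K_def E_def ..
  show ?thesis
  proof
    assume min: "\<forall>\<tau>\<in>hardcore L. real_area L \<tau> = 2 * l^2 + 2 * l + 1 \<longrightarrow> perimeter L \<sigma> \<le> perimeter L \<tau>"
    define \<eta>0 where "\<eta>0 = ((1::nat), (0::nat))"
    have \<eta>0: "\<eta>0 \<in> odd_sites L" unfolding \<eta>0_def odd_sites_def sites_def using L2 by simp
    define S0 where "S0 = rhombus_core L l l \<eta>0"
    define N0 where "N0 = ext_boundary L S0"
    have S0odd: "S0 \<subseteq> odd_sites L" unfolding S0_def by (rule rhombus_odd[OF ev L0 \<eta>0])
    have cS0: "card S0 = l^2" unfolding S0_def using card_rhombus_eq assms(4) by simp
    have cN0: "card N0 \<le> (l+1)^2" unfolding N0_def S0_def by (rule ns_le[OF L2])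
    have N0even: "N0 \<subseteq> even_sites L" unfolding N0_def by (rule ext_boundary_even[OF ev L2 S0odd])
    have finEv: "finite (even_sites L)" unfolding even_sites_def sites_def by simp
    have finN0: "finite N0" using N0even finEv finite_subset by blast
    have p: "(l+1)^2 \<le> (L div 2)^2" by (rule power_mono) (use Ll in auto)
    have evbig: "(l+1)^2 \<le> card (even_sites L)" using le_trans[OF p card_even_ge[OF ev]] .
    have "(l+1)^2 - card N0 \<le> card (even_sites L - N0)"
      using evbig card_Diff_subset[OF finN0 N0even] card_mono[OF finEv N0even] by simp
    then obtain T where T: "T \<subseteq> even_sites L - N0" "card T = (l+1)^2 - card N0" "finite T"
      by (rule obtain_subset_with_card_n)
    define E0 where "E0 = N0 \<union> T"
    have E0even: "E0 \<subseteq> even_sites L" unfolding E0_def using N0even T(1) by auto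
    have cE0: "card E0 = (l+1)^2"
    proof -
      have "N0 \<inter> T = {}" using T(1) by auto
      then have "card E0 = card N0 + card T" unfolding E0_def using card_Un_disjoint[OF finN0 T(3)] by simp
      then show ?thesis using T(2) cN0 by simp
    qed
    define \<tau>0 where "\<tau>0 v = (v \<in> S0 \<or> (v \<in> even_sites L \<and> v \<notin> E0))" for v
    have oe: "odd_sites L \<inter> even_sites L = {}" unfolding odd_sites_def even_sites_def by auto
    have hc0: "\<tau>0 \<in> hardcore L"
    proof -
      have s: "\<tau>0 v \<Longrightarrow> v \<in> sites L" for v
        unfolding \<tau>0_def using S0odd unfolding odd_sites_def even_sites_def by auto
      have a: "\<not> (\<tau>0 v \<and> \<tau>0 w)" if vw: "adj L v w" for v w
      proof
        assume tt: "\<tau>0 v \<and> \<tau>0 w"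
        show False
        proof (cases "v \<in> S0")
          case True
          then have we: "w \<in> even_sites L" using adj_odd_even[OF ev L2 vw] S0odd by auto
          then have "w \<notin> S0" using S0odd oe by auto
          then have "w \<notin> E0" using tt unfolding \<tau>0_def by simp
          moreover have "w \<in> N0" unfolding N0_def using ext_boundary_mem[OF ev L2 S0odd True vw] .
          ultimately show False unfolding E0_def by simp
        next
          case False
          then have ve: "v \<in> even_sites L" "v \<notin> E0" using tt unfolding \<tau>0_def by auto
          then have wo: "w \<in> odd_sites L" using adj_even_odd[OF ev L2 vw] by simp
          then have "w \<notin> even_sites L" using oe by auto
          then have wS: "w \<in> S0" using tt unfolding \<tau>0_def by simp
          have "adj L w v" using vw adj_sym by metis
          then have "v \<in> N0" unfolding N0_def using ext_boundary_mem[OF ev L2 S0odd wS] by simp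
          then show False using ve unfolding E0_def by simp
        qed
      qed
      show ?thesis unfolding hardcore_def using s a by blast
    qed
    have K0: "{v \<in> odd_sites L. \<tau>0 v} = S0" unfolding \<tau>0_def using S0odd oe by auto
    have E0eq: "{v \<in> even_sites L. \<not> \<tau>0 v} = E0" unfolding \<tau>0_def using S0odd oe E0even by auto
    have ar0: "real_area L \<tau>0 = 2 * l^2 + 2 * l + 1" unfolding real_area_def K0 E0eq cS0 cE0 sq by simp
    have pf0: "perimeter L \<tau>0 + 4 * l^2 = 4 * (l+1)^2"
      using perimeter_formula[OF ev L4 hc0] K0 E0eq cS0 cE0 by simp
    have "perimeter L \<sigma> \<le> perimeter L \<tau>0" using min hc0 ar0 by blast
    then have kbig: "l^2 \<le> card K" using pf pf0 kE sq A_def by linarith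
    have NB: "ext_boundary L K \<subseteq> E" unfolding K_def E_def by (rule hc_nb[OF ev L2 hc])
    have finE: "finite E" unfolding E_def by (rule fin_E)
    have "card (ext_boundary L K) \<le> card E" by (rule card_mono[OF finE NB])
    then have small: "card K + card (ext_boundary L K) \<le> 2 * l^2 + 2 * l + 1" using kE A_def by simp
    have Kodd: "K \<subseteq> odd_sites L" unfolding K_def by auto
    obtain \<eta> where res: "card K = l^2" "card (ext_boundary L K) = (l+1)^2" "\<eta> \<in> odd_sites L" "K = rhombus_core L l l \<eta>"
      using iso[OF ev L4 l1 Ll Kodd kbig small] by blast
    have "card E = (l+1)^2" using kE res(1) A_def sq by simp
    then have NBE: "ext_boundary L K = E" using card_subset_eq[OF finE NB] res(2) by simp
    have "odd_region L \<sigma> = rhombus L l l \<eta>" unfolding ORKE rhombus_def using res(4) NBE by simp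
    then show "\<exists>\<eta>\<in>odd_sites L. components L (odd_region L \<sigma>) = {rhombus L l l \<eta>}"
      using rhombus_conn[OF ev L2 res(3) l1] res(3) by auto
  next
    assume "\<exists>\<eta>\<in>odd_sites L. components L (odd_region L \<sigma>) = {rhombus L l l \<eta>}"
    then obtain \<eta> where \<eta>: "\<eta> \<in> odd_sites L" "components L (odd_region L \<sigma>) = {rhombus L l l \<eta>}" by blast
    have OR: "odd_region L \<sigma> = rhombus L l l \<eta>" using comp_Union[of L "odd_region L \<sigma>"] \<eta>(2) by simp
    define S where "S = rhombus_core L l l \<eta>"
    have Sodd: "S \<subseteq> odd_sites L" unfolding S_def by (rule rhombus_odd[OF ev L0 \<eta>(1)])
    have NSeven: "ext_boundary L S \<subseteq> even_sites L" by (rule ext_boundary_even[OF ev L2 Sodd])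
    have oe: "odd_sites L \<inter> even_sites L = {}" unfolding odd_sites_def even_sites_def by auto
    have "K = odd_region L \<sigma> \<inter> odd_sites L" unfolding ORKE K_def E_def using oe by auto
    also have "\<dots> = S" unfolding OR rhombus_def S_def[symmetric] using Sodd NSeven oe by auto
    finally have KS: "K = S" .
    have kl: "card K = l^2" unfolding KS S_def using card_rhombus_eq assms(4) by simp
    show "\<forall>\<tau>\<in>hardcore L. real_area L \<tau> = 2 * l^2 + 2 * l + 1 \<longrightarrow> perimeter L \<sigma> \<le> perimeter L \<tau>"
    proof (intro ballI impI)
      fix \<tau> assume hct: "\<tau> \<in> hardcore L" and art: "real_area L \<tau> = 2 * l^2 + 2 * l + 1"
      have kt: "card {v \<in> odd_sites L. \<tau> v} \<le> l^2" by (rule kbound[OF ev L4 l1 Ll hct art])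
      have pt: "perimeter L \<tau> + 4 * card {v \<in> odd_sites L. \<tau> v} = 4 * card {v \<in> even_sites L. \<not> \<tau> v}"
        by (rule perimeter_formula[OF ev L4 hct])
      have at: "card {v \<in> odd_sites L. \<tau> v} + card {v \<in> even_sites L. \<not> \<tau> v} = 2 * l^2 + 2 * l + 1"
        using art unfolding real_area_def .
      show "perimeter L \<sigma> \<le> perimeter L \<tau>" using kt pt at pf kE kl A_def by linarith
    qed
  qed
qed

end
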